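(* For a right $R$-module $M$ the following are equivalent: (a) $M$ is a finite $\Sigma$-Rickart module; (b) every finitely $M$-generated submodule of any module in $\mathrm{add}(M)$ satisfies the $D_2$ condition.
   Context: Modules are unitary right $R$-modules; $M^{(n)}$ is the direct sum of $n$ copies of $M$. $M$ is Rickart if $\ker\varphi$ is a direct summand of $M$ for all $\varphi\in\mathrm{End}_R(M)$; $M$ is finite $\Sigma$-Rickart if $M^{(n)}$ is Rickart for all $n>0$. $\mathrm{add}(M)$ is the class of modules isomorphic to a direct summand of $M^{(n)}$ for some integer $n>0$. A module $N$ is finitely $M$-generated if there is an epimorphism $M^{(n)}\to N$ for some $n>0$. A module $X$ satisfies the $D_2$ condition if for every submodule $Y\le X$ such that $X/Y$ is isomorphic to a direct summand of $X$, $Y$ is a direct summand of $X$. *)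

theory Defs
  imports "HOL-Algebra.Ring"
begin

text \<open>Right modules over an arbitrary (not necessarily commutative) ring R.
  The module record extends the additive part of the ring record; the fields
  mult and one of the module are unused.\<close>

record ('a, 'b) rmodule = "'b ring" +
  rsmult :: "'b \<Rightarrow> 'a \<Rightarrow> 'b"

definition rmod :: "'a ring \<Rightarrow> ('a, 'b) rmodule \<Rightarrow> bool" where
  "rmod R M \<longleftrightarrow> ring R \<and> abelian_group M \<and>
     (\<forall>x\<in>carrier M. \<forall>r\<in>carrier R. rsmult M x r \<in> carrier M) \<and>
     (\<forall>x\<in>carrier M. \<forall>y\<in>carrier M. \<forall>r\<in>carrier R.
        rsmult M (x \<oplus>\<^bsub>M\<^esub> y) r = rsmult M x r \<oplus>\<^bsub>M\<^esub> rsmult M y r) \<and>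
     (\<forall>x\<in>carrier M. \<forall>r\<in>carrier R. \<forall>s\<in>carrier R.
        rsmult M x (r \<oplus>\<^bsub>R\<^esub> s) = rsmult M x r \<oplus>\<^bsub>M\<^esub> rsmult M x s) \<and>
     (\<forall>x\<in>carrier M. \<forall>r\<in>carrier R. \<forall>s\<in>carrier R.
        rsmult M x (r \<otimes>\<^bsub>R\<^esub> s) = rsmult M (rsmult M x r) s) \<and>
     (\<forall>x\<in>carrier M. rsmult M x \<one>\<^bsub>R\<^esub> = x)"

definition submod :: "'a ring \<Rightarrow> ('a, 'b) rmodule \<Rightarrow> 'b set \<Rightarrow> bool" where
  "submod R M N \<longleftrightarrow> N \<subseteq> carrier M \<and> \<zero>\<^bsub>M\<^esub> \<in> N \<and>
     (\<forall>x\<in>N. \<forall>y\<in>N. x \<oplus>\<^bsub>M\<^esub> y \<in> N) \<and>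
     (\<forall>x\<in>N. \<ominus>\<^bsub>M\<^esub> x \<in> N) \<and>
     (\<forall>x\<in>N. \<forall>r\<in>carrier R. rsmult M x r \<in> N)"

definition direct_summand :: "'a ring \<Rightarrow> ('a, 'b) rmodule \<Rightarrow> 'b set \<Rightarrow> bool" where
  "direct_summand R M K \<longleftrightarrow> submod R M K \<and>
     (\<exists>L. submod R M L \<and> K \<inter> L = {\<zero>\<^bsub>M\<^esub>} \<and>
          {k \<oplus>\<^bsub>M\<^esub> l | k l. k \<in> K \<and> l \<in> L} = carrier M)"

definition rhom :: "'a ring \<Rightarrow> ('a, 'b) rmodule \<Rightarrow> ('a, 'c) rmodule \<Rightarrow> ('b \<Rightarrow> 'c) \<Rightarrow> bool" where
  "rhom R M N f \<longleftrightarrow> f \<in> carrier M \<rightarrow> carrier N \<and>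
     (\<forall>x\<in>carrier M. \<forall>y\<in>carrier M. f (x \<oplus>\<^bsub>M\<^esub> y) = f x \<oplus>\<^bsub>N\<^esub> f y) \<and>
     (\<forall>x\<in>carrier M. \<forall>r\<in>carrier R. f (rsmult M x r) = rsmult N (f x) r)"

definition riso :: "'a ring \<Rightarrow> ('a, 'b) rmodule \<Rightarrow> ('a, 'c) rmodule \<Rightarrow> bool" where
  "riso R M N \<longleftrightarrow> (\<exists>f. rhom R M N f \<and> bij_betw f (carrier M) (carrier N))"

definition rker :: "('a, 'b) rmodule \<Rightarrow> ('a, 'c) rmodule \<Rightarrow> ('b \<Rightarrow> 'c) \<Rightarrow> 'b set" where
  "rker M N f = {x \<in> carrier M. f x = \<zero>\<^bsub>N\<^esub>}"

definition rickart :: "'a ring \<Rightarrow> ('a, 'b) rmodule \<Rightarrow> bool" where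
  "rickart R M \<longleftrightarrow> (\<forall>\<phi>. rhom R M M \<phi> \<longrightarrow> direct_summand R M (rker M M \<phi>))"

text \<open>The direct sum M^(n) of n copies of M, realised as functions on nat
  supported on {0..<n}.\<close>

definition dpow :: "('a, 'b) rmodule \<Rightarrow> nat \<Rightarrow> ('a, nat \<Rightarrow> 'b) rmodule" where
  "dpow M n = \<lparr> carrier = {f. (\<forall>i<n. f i \<in> carrier M) \<and> (\<forall>i\<ge>n. f i = \<zero>\<^bsub>M\<^esub>)},
       mult = (\<lambda>f g i. \<zero>\<^bsub>M\<^esub>), one = (\<lambda>i. \<zero>\<^bsub>M\<^esub>),
       zero = (\<lambda>i. \<zero>\<^bsub>M\<^esub>),
       add = (\<lambda>f g i. f i \<oplus>\<^bsub>M\<^esub> g i),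
       rsmult = (\<lambda>f r i. rsmult M (f i) r) \<rparr>"

definition fin_sigma_rickart :: "'a ring \<Rightarrow> ('a, 'b) rmodule \<Rightarrow> bool" where
  "fin_sigma_rickart R M \<longleftrightarrow> (\<forall>n>0. rickart R (dpow M n))"

definition in_add :: "'a ring \<Rightarrow> ('a, 'b) rmodule \<Rightarrow> ('a, 'c) rmodule \<Rightarrow> bool" where
  "in_add R M X \<longleftrightarrow> (\<exists>n>0. \<exists>K. direct_summand R (dpow M n) K \<and>
                         riso R X ((dpow M n)\<lparr>carrier := K\<rparr>))"

definition fin_Mgen :: "'a ring \<Rightarrow> ('a, 'b) rmodule \<Rightarrow> ('a, 'c) rmodule \<Rightarrow> bool" where
  "fin_Mgen R M N \<longleftrightarrow> (\<exists>n>0. \<exists>f. rhom R (dpow M n) N f \<and> f ` carrier (dpow M n) = carrier N)"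

definition qcoset :: "('a, 'c) rmodule \<Rightarrow> 'c set \<Rightarrow> 'c \<Rightarrow> 'c set" where
  "qcoset X Y x = {x \<oplus>\<^bsub>X\<^esub> y | y. y \<in> Y}"

definition quot :: "('a, 'c) rmodule \<Rightarrow> 'c set \<Rightarrow> ('a, 'c set) rmodule" where
  "quot X Y = \<lparr> carrier = qcoset X Y ` carrier X,
       mult = (\<lambda>A B. Y), one = Y,
       zero = Y,
       add = (\<lambda>A B. {a \<oplus>\<^bsub>X\<^esub> b | a b. a \<in> A \<and> b \<in> B}),
       rsmult = (\<lambda>A r. {rsmult X a r \<oplus>\<^bsub>X\<^esub> y | a y. a \<in> A \<and> y \<in> Y}) \<rparr>"

definition D2 :: "'a ring \<Rightarrow> ('a, 'c) rmodule \<Rightarrow> bool" where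
  "D2 R X \<longleftrightarrow> (\<forall>Y. submod R X Y \<and>
       (\<exists>K. direct_summand R X K \<and> riso R (quot X Y) (X\<lparr>carrier := K\<rparr>))
       \<longrightarrow> direct_summand R X Y)"

text \<open>Condition (b), with the modules of add(M) ranging over carrier type 'c.\<close>

definition add_fg_D2 :: "'a ring \<Rightarrow> ('a, 'b) rmodule \<Rightarrow> 'c itself \<Rightarrow> bool" where
  "add_fg_D2 R M (_ :: 'c itself) \<longleftrightarrow>
     (\<forall>X :: ('a, 'c) rmodule. rmod R X \<and> in_add R M X \<longrightarrow>
        (\<forall>S. submod R X S \<and> fin_Mgen R M (X\<lparr>carrier := S\<rparr>) \<longrightarrow> D2 R (X\<lparr>carrier := S\<rparr>)))"

end

theory Submission
  imports Defs
begin


lemma rmod_ring: "rmod R M \<Longrightarrow> ring R" by (simp add: rmod_def)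
lemma rmod_ab: "rmod R M \<Longrightarrow> abelian_group M" by (simp add: rmod_def)
lemma rmod_sm_closed: "rmod R M \<Longrightarrow> x \<in> carrier M \<Longrightarrow> r \<in> carrier R \<Longrightarrow> rsmult M x r \<in> carrier M"
  by (simp add: rmod_def)
lemma rmod_sm_add: "rmod R M \<Longrightarrow> x \<in> carrier M \<Longrightarrow> y \<in> carrier M \<Longrightarrow> r \<in> carrier R \<Longrightarrow>
   rsmult M (x \<oplus>\<^bsub>M\<^esub> y) r = rsmult M x r \<oplus>\<^bsub>M\<^esub> rsmult M y r"
  by (simp add: rmod_def)

lemma addhom_zero:
  assumes A: "abelian_group A" and B: "abelian_group B"
    and f: "f \<in> carrier A \<rightarrow> carrier B"
    and add: "\<And>x y. x \<in> carrier A \<Longrightarrow> y \<in> carrier A \<Longrightarrow> f (x \<oplus>\<^bsub>A\<^esub> y) = f x \<oplus>\<^bsub>B\<^esub> f y"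
  shows "f \<zero>\<^bsub>A\<^esub> = \<zero>\<^bsub>B\<^esub>"
proof -
  interpret A: abelian_group A by fact
  interpret B: abelian_group B by fact
  have z: "f \<zero>\<^bsub>A\<^esub> \<in> carrier B" using f by auto
  have "f \<zero>\<^bsub>A\<^esub> \<oplus>\<^bsub>B\<^esub> f \<zero>\<^bsub>A\<^esub> = f \<zero>\<^bsub>A\<^esub>"
    using add[of "\<zero>\<^bsub>A\<^esub>" "\<zero>\<^bsub>A\<^esub>"] by simp
  then show ?thesis using z by simp
qed

lemma addhom_neg:
  assumes A: "abelian_group A" and B: "abelian_group B"
    and f: "f \<in> carrier A \<rightarrow> carrier B"
    and add: "\<And>x y. x \<in> carrier A \<Longrightarrow> y \<in> carrier A \<Longrightarrow> f (x \<oplus>\<^bsub>A\<^esub> y) = f x \<oplus>\<^bsub>B\<^esub> f y"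
    and x: "x \<in> carrier A"
  shows "f (\<ominus>\<^bsub>A\<^esub> x) = \<ominus>\<^bsub>B\<^esub> f x"
proof -
  interpret A: abelian_group A by fact
  interpret B: abelian_group B by fact
  have z: "f \<zero>\<^bsub>A\<^esub> = \<zero>\<^bsub>B\<^esub>" by (rule addhom_zero[OF A B f add])
  have "f (\<ominus>\<^bsub>A\<^esub> x) \<oplus>\<^bsub>B\<^esub> f x = f (\<ominus>\<^bsub>A\<^esub> x \<oplus>\<^bsub>A\<^esub> x)"
    using add[of "\<ominus>\<^bsub>A\<^esub> x" x] x by simp
  also have "\<dots> = \<zero>\<^bsub>B\<^esub>" using z x by (simp add: A.l_neg)
  finally have "f (\<ominus>\<^bsub>A\<^esub> x) \<oplus>\<^bsub>B\<^esub> f x = \<zero>\<^bsub>B\<^esub>" .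
  then show ?thesis using f x by (intro B.minus_equality[symmetric]) auto
qed

lemma rmod_sm_zero: assumes X: "rmod R M" and r: "r \<in> carrier R" shows "rsmult M \<zero>\<^bsub>M\<^esub> r = \<zero>\<^bsub>M\<^esub>"
proof -
  have "(\<lambda>x. rsmult M x r) \<zero>\<^bsub>M\<^esub> = \<zero>\<^bsub>M\<^esub>"
    by (rule addhom_zero[OF rmod_ab[OF X] rmod_ab[OF X]]) (use X r in \<open>auto simp: rmod_sm_closed rmod_sm_add\<close>)
  then show ?thesis by simp
qed

lemma rmod_sm_neg: assumes X: "rmod R M" and r: "r \<in> carrier R" and x: "x \<in> carrier M"
  shows "rsmult M (\<ominus>\<^bsub>M\<^esub> x) r = \<ominus>\<^bsub>M\<^esub> rsmult M x r"
proof -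
  have "(\<lambda>x. rsmult M x r) (\<ominus>\<^bsub>M\<^esub> x) = \<ominus>\<^bsub>M\<^esub> (\<lambda>x. rsmult M x r) x"
    by (rule addhom_neg[OF rmod_ab[OF X] rmod_ab[OF X]]) (use X r x in \<open>auto simp: rmod_sm_closed rmod_sm_add\<close>)
  then show ?thesis by simp
qed

lemma dpow_carrier: "carrier (dpow M n) = {f. (\<forall>i<n. f i \<in> carrier M) \<and> (\<forall>i\<ge>n. f i = \<zero>\<^bsub>M\<^esub>)}"
  and dpow_add: "add (dpow M n) = (\<lambda>f g i. f i \<oplus>\<^bsub>M\<^esub> g i)"
  and dpow_zero: "zero (dpow M n) = (\<lambda>i. \<zero>\<^bsub>M\<^esub>)"
  and dpow_sm: "rsmult (dpow M n) = (\<lambda>f r i. rsmult M (f i) r)"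
  by (simp_all add: dpow_def)

lemma dpow_ab: assumes "abelian_group M" shows "abelian_group (dpow M n)"
proof -
  interpret M: abelian_group M by fact
  show ?thesis
  proof (rule abelian_groupI)
    show "x \<oplus>\<^bsub>dpow M n\<^esub> y \<in> carrier (dpow M n)" if "x \<in> carrier (dpow M n)" "y \<in> carrier (dpow M n)" for x y
      using that by (auto simp: dpow_carrier dpow_add)
    show "\<zero>\<^bsub>dpow M n\<^esub> \<in> carrier (dpow M n)" by (auto simp: dpow_carrier dpow_zero)
    show "x \<oplus>\<^bsub>dpow M n\<^esub> y \<oplus>\<^bsub>dpow M n\<^esub> z = x \<oplus>\<^bsub>dpow M n\<^esub> (y \<oplus>\<^bsub>dpow M n\<^esub> z)"
      if "x \<in> carrier (dpow M n)" "y \<in> carrier (dpow M n)" "z \<in> carrier (dpow M n)" for x y z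
      unfolding dpow_add
    proof (rule ext)
      fix i show "x i \<oplus>\<^bsub>M\<^esub> y i \<oplus>\<^bsub>M\<^esub> z i = x i \<oplus>\<^bsub>M\<^esub> (y i \<oplus>\<^bsub>M\<^esub> z i)"
        using that by (cases "i < n") (simp_all add: dpow_carrier M.a_assoc)
    qed
    show "x \<oplus>\<^bsub>dpow M n\<^esub> y = y \<oplus>\<^bsub>dpow M n\<^esub> x" if "x \<in> carrier (dpow M n)" "y \<in> carrier (dpow M n)" for x y
      unfolding dpow_add
    proof (rule ext)
      fix i show "x i \<oplus>\<^bsub>M\<^esub> y i = y i \<oplus>\<^bsub>M\<^esub> x i"
        using that by (cases "i < n") (simp_all add: dpow_carrier M.a_comm)
    qed
    show "\<zero>\<^bsub>dpow M n\<^esub> \<oplus>\<^bsub>dpow M n\<^esub> x = x" if "x \<in> carrier (dpow M n)" for x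
      unfolding dpow_add dpow_zero
    proof (rule ext)
      fix i show "\<zero>\<^bsub>M\<^esub> \<oplus>\<^bsub>M\<^esub> x i = x i"
        using that by (cases "i < n") (simp_all add: dpow_carrier)
    qed
    show "\<exists>y\<in>carrier (dpow M n). y \<oplus>\<^bsub>dpow M n\<^esub> x = \<zero>\<^bsub>dpow M n\<^esub>" if x: "x \<in> carrier (dpow M n)" for x
    proof (intro bexI)
      show "(\<lambda>i. \<ominus>\<^bsub>M\<^esub> x i) \<oplus>\<^bsub>dpow M n\<^esub> x = \<zero>\<^bsub>dpow M n\<^esub>"
        unfolding dpow_add dpow_zero
      proof (rule ext)
        fix i show "\<ominus>\<^bsub>M\<^esub> x i \<oplus>\<^bsub>M\<^esub> x i = \<zero>\<^bsub>M\<^esub>"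
          using x by (cases "i < n") (simp_all add: dpow_carrier M.l_neg)
      qed
      show "(\<lambda>i. \<ominus>\<^bsub>M\<^esub> x i) \<in> carrier (dpow M n)"
        using x by (auto simp: dpow_carrier)
    qed
  qed
qed


lemma dpow_neg: assumes "abelian_group M" "f \<in> carrier (dpow M n)"
  shows "\<ominus>\<^bsub>dpow M n\<^esub> f = (\<lambda>i. \<ominus>\<^bsub>M\<^esub> f i)"
proof -
  interpret M: abelian_group M by fact
  interpret D: abelian_group "dpow M n" using dpow_ab[OF assms(1)] .
  show ?thesis
  proof (rule D.minus_equality)
    show "(\<lambda>i. \<ominus>\<^bsub>M\<^esub> f i) \<oplus>\<^bsub>dpow M n\<^esub> f = \<zero>\<^bsub>dpow M n\<^esub>"
      unfolding dpow_add dpow_zero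
    proof (rule ext)
      fix i show "\<ominus>\<^bsub>M\<^esub> f i \<oplus>\<^bsub>M\<^esub> f i = \<zero>\<^bsub>M\<^esub>"
        using assms(2) by (cases "i < n") (simp_all add: dpow_carrier M.l_neg)
    qed
    show "(\<lambda>i. \<ominus>\<^bsub>M\<^esub> f i) \<in> carrier (dpow M n)" using assms(2) by (auto simp: dpow_carrier)
  qed (fact assms)
qed

lemma dpow_mono: assumes "abelian_group M" "n \<le> k" shows "carrier (dpow M n) \<subseteq> carrier (dpow M k)"
proof
  fix x assume x: "x \<in> carrier (dpow M n)"
  have "x i \<in> carrier M" if "i < k" for i
    using x abelian_monoid.zero_closed[OF abelian_group.axioms(1)[OF assms(1)]] by (cases "i < n") (auto simp: dpow_carrier)
  then show "x \<in> carrier (dpow M k)" using x assms(2) by (auto simp: dpow_carrier)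
qed

lemma rmod_dpow: assumes "rmod R M" shows "rmod R (dpow M n)"
proof -
  interpret M: abelian_group M using rmod_ab[OF assms] .
  note z = rmod_sm_zero[OF assms]
  show ?thesis unfolding rmod_def
  proof (intro conjI ballI)
    show "ring R" using rmod_ring[OF assms] .
    show "abelian_group (dpow M n)" using dpow_ab[OF M.abelian_group_axioms] .
    fix x r assume x: "x \<in> carrier (dpow M n)" and r: "r \<in> carrier R"
    show "rsmult (dpow M n) x r \<in> carrier (dpow M n)"
      using x r z by (auto simp: dpow_carrier dpow_sm rmod_sm_closed[OF assms])
    {fix y assume y: "y \<in> carrier (dpow M n)"
    show "rsmult (dpow M n) (x \<oplus>\<^bsub>dpow M n\<^esub> y) r =
       rsmult (dpow M n) x r \<oplus>\<^bsub>dpow M n\<^esub> rsmult (dpow M n) y r"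
      unfolding dpow_sm dpow_add
    proof (rule ext)
      fix i show "rsmult M (x i \<oplus>\<^bsub>M\<^esub> y i) r = rsmult M (x i) r \<oplus>\<^bsub>M\<^esub> rsmult M (y i) r"
        using x y r z by (cases "i < n") (simp_all add: dpow_carrier rmod_sm_add[OF assms])
    qed}
    {fix s assume s: "s \<in> carrier R"
    show "rsmult (dpow M n) x (r \<oplus>\<^bsub>R\<^esub> s) =
       rsmult (dpow M n) x r \<oplus>\<^bsub>dpow M n\<^esub> rsmult (dpow M n) x s"
      unfolding dpow_sm dpow_add
    proof (rule ext)
      fix i show "rsmult M (x i) (r \<oplus>\<^bsub>R\<^esub> s) = rsmult M (x i) r \<oplus>\<^bsub>M\<^esub> rsmult M (x i) s"
        using x r s z assms rmod_ring[OF assms] by (cases "i < n") (simp_all add: dpow_carrier rmod_def ring.ring_simprules)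
    qed
    show "rsmult (dpow M n) x (r \<otimes>\<^bsub>R\<^esub> s) = rsmult (dpow M n) (rsmult (dpow M n) x r) s"
      unfolding dpow_sm
    proof (rule ext)
      fix i show "rsmult M (x i) (r \<otimes>\<^bsub>R\<^esub> s) = rsmult M (rsmult M (x i) r) s"
        using x r s z assms rmod_ring[OF assms] by (cases "i < n") (simp_all add: dpow_carrier rmod_def ring.ring_simprules)
    qed}
  next
    fix x assume x: "x \<in> carrier (dpow M n)"
    show "rsmult (dpow M n) x \<one>\<^bsub>R\<^esub> = x"
      unfolding dpow_sm
    proof (rule ext)
      fix i show "rsmult M (x i) \<one>\<^bsub>R\<^esub> = x i"
        using x z assms rmod_ring[OF assms] by (cases "i < n") (simp_all add: dpow_carrier rmod_def ring.ring_simprules)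
    qed
  qed
qed

lemma rhom_restr: "rhom R A (X\<lparr>carrier := S\<rparr>) f \<longleftrightarrow> rhom R A X f \<and> f \<in> carrier A \<rightarrow> S"
  if "S \<subseteq> carrier X"
  using that unfolding rhom_def by auto

lemma rhom_zero: "abelian_group A \<Longrightarrow> abelian_group B \<Longrightarrow> rhom R A B f \<Longrightarrow> f \<zero>\<^bsub>A\<^esub> = \<zero>\<^bsub>B\<^esub>"
  unfolding rhom_def by (rule addhom_zero) auto

lemma rhom_neg: "abelian_group A \<Longrightarrow> abelian_group B \<Longrightarrow> rhom R A B f \<Longrightarrow> x \<in> carrier A \<Longrightarrow>
   f (\<ominus>\<^bsub>A\<^esub> x) = \<ominus>\<^bsub>B\<^esub> f x"
  unfolding rhom_def by (rule addhom_neg) auto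

lemma sub_ab: assumes "abelian_group X" "submod R X S" shows "abelian_group (X\<lparr>carrier := S\<rparr>)"
proof -
  interpret X: abelian_group X by fact
  have sub: "S \<subseteq> carrier X" using assms(2) by (simp add: submod_def)
  show ?thesis
  proof (rule abelian_groupI, goal_cases)
    case (3 x y z)
    then show ?case using sub by (simp add: X.a_assoc subsetD)
  next
    case (4 x y)
    then show ?case using sub by (simp add: X.a_comm subsetD)
  next
    case (5 x)
    then show ?case using sub by (simp add: subsetD)
  next
    case (6 x)
    then show ?case using assms(2) sub by (intro bexI[of _ "\<ominus>\<^bsub>X\<^esub> x"]) (auto simp: submod_def X.l_neg)
  qed (use assms(2) sub in \<open>auto simp: submod_def\<close>)
qed

lemma sub_neg: assumes "abelian_group X" "submod R X S" "x \<in> S"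
  shows "\<ominus>\<^bsub>X\<lparr>carrier := S\<rparr>\<^esub> x = \<ominus>\<^bsub>X\<^esub> x"
proof -
  interpret X: abelian_group X by fact
  interpret N: abelian_group "X\<lparr>carrier := S\<rparr>" using sub_ab[OF assms(1,2)] .
  have sub: "S \<subseteq> carrier X" using assms(2) by (simp add: submod_def)
  show ?thesis using assms sub by (intro N.minus_equality) (auto simp: submod_def X.l_neg)
qed

lemma submod_sub: assumes "abelian_group X" "submod R X S"
  shows "submod R (X\<lparr>carrier := S\<rparr>) L \<longleftrightarrow> submod R X L \<and> L \<subseteq> S"
proof -
  have "\<ominus>\<^bsub>X\<lparr>carrier := S\<rparr>\<^esub> x = \<ominus>\<^bsub>X\<^esub> x" if "L \<subseteq> S" "x \<in> L" for x
    using sub_neg[OF assms] that by blast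
  then show ?thesis using assms unfolding submod_def by auto
qed


lemma submodD: assumes "submod R X Y"
  shows "Y \<subseteq> carrier X" "\<zero>\<^bsub>X\<^esub> \<in> Y" "\<And>x y. x \<in> Y \<Longrightarrow> y \<in> Y \<Longrightarrow> x \<oplus>\<^bsub>X\<^esub> y \<in> Y"
    "\<And>x. x \<in> Y \<Longrightarrow> \<ominus>\<^bsub>X\<^esub> x \<in> Y" "\<And>x r. x \<in> Y \<Longrightarrow> r \<in> carrier R \<Longrightarrow> rsmult X x r \<in> Y"
  using assms unfolding submod_def by auto

locale qsetup =
  fixes R :: "'a ring" and X :: "('a, 'c) rmodule" and Y :: "'c set"
  assumes X: "rmod R X" and Y: "submod R X Y"
begin

sublocale X: abelian_group X using rmod_ab[OF X] .

lemma Ysub: "y \<in> Y \<Longrightarrow> y \<in> carrier X" using submodD(1)[OF Y] by blast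

lemma qc_self: assumes x: "x \<in> carrier X" shows "x \<in> qcoset X Y x"
proof -
  have "x = x \<oplus>\<^bsub>X\<^esub> \<zero>\<^bsub>X\<^esub>" using x by simp
  then show ?thesis unfolding qcoset_def using submodD(2)[OF Y] by blast
qed

lemma qc_zero: "qcoset X Y \<zero>\<^bsub>X\<^esub> = Y"
proof
  show "qcoset X Y \<zero>\<^bsub>X\<^esub> \<subseteq> Y"
  proof
    fix w assume "w \<in> qcoset X Y \<zero>\<^bsub>X\<^esub>"
    then obtain y where y: "y \<in> Y" "w = \<zero>\<^bsub>X\<^esub> \<oplus>\<^bsub>X\<^esub> y" unfolding qcoset_def by blast
    then have "w = y" using Ysub[OF y(1)] by simp
    then show "w \<in> Y" using y by simp
  qed
  show "Y \<subseteq> qcoset X Y \<zero>\<^bsub>X\<^esub>"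
  proof
    fix y assume y: "y \<in> Y"
    then have "y = \<zero>\<^bsub>X\<^esub> \<oplus>\<^bsub>X\<^esub> y" using Ysub[OF y] by simp
    then show "y \<in> qcoset X Y \<zero>\<^bsub>X\<^esub>" unfolding qcoset_def using y by blast
  qed
qed

lemma qc_eq_iff: assumes x: "x \<in> carrier X" and z: "z \<in> carrier X"
  shows "qcoset X Y x = qcoset X Y z \<longleftrightarrow> x \<oplus>\<^bsub>X\<^esub> \<ominus>\<^bsub>X\<^esub> z \<in> Y"
proof
  assume "qcoset X Y x = qcoset X Y z"
  then have "x \<in> qcoset X Y z" using qc_self[OF x] by simp
  then obtain y where y: "y \<in> Y" "x = z \<oplus>\<^bsub>X\<^esub> y" unfolding qcoset_def by auto
  then have "x \<oplus>\<^bsub>X\<^esub> \<ominus>\<^bsub>X\<^esub> z = y" using z Ysub[OF y(1)]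
    by (simp add: X.a_ac X.r_neg1 X.r_neg2 X.r_neg)
  then show "x \<oplus>\<^bsub>X\<^esub> \<ominus>\<^bsub>X\<^esub> z \<in> Y" using y by simp
next
  assume d: "x \<oplus>\<^bsub>X\<^esub> \<ominus>\<^bsub>X\<^esub> z \<in> Y"
  define d where "d = x \<oplus>\<^bsub>X\<^esub> \<ominus>\<^bsub>X\<^esub> z"
  have dY: "d \<in> Y" using d d_def by simp
  have dc: "d \<in> carrier X" using Ysub[OF dY] .
  have xd: "x = z \<oplus>\<^bsub>X\<^esub> d" unfolding d_def using x z by (simp add: X.a_ac X.r_neg2 X.r_neg X.l_neg)
  show "qcoset X Y x = qcoset X Y z"
  proof
    show "qcoset X Y x \<subseteq> qcoset X Y z"
    proof
      fix w assume "w \<in> qcoset X Y x"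
      then obtain y where y: "y \<in> Y" "w = x \<oplus>\<^bsub>X\<^esub> y" unfolding qcoset_def by auto
      then have "w = z \<oplus>\<^bsub>X\<^esub> (d \<oplus>\<^bsub>X\<^esub> y)" using xd z dc Ysub by (simp add: X.a_assoc)
      moreover have "d \<oplus>\<^bsub>X\<^esub> y \<in> Y" using dY y submodD(3)[OF Y] by blast
      ultimately show "w \<in> qcoset X Y z" unfolding qcoset_def by blast
    qed
    show "qcoset X Y z \<subseteq> qcoset X Y x"
    proof
      fix w assume "w \<in> qcoset X Y z"
      then obtain y where y: "y \<in> Y" "w = z \<oplus>\<^bsub>X\<^esub> y" unfolding qcoset_def by auto
      then have "w = x \<oplus>\<^bsub>X\<^esub> (\<ominus>\<^bsub>X\<^esub> d \<oplus>\<^bsub>X\<^esub> y)" using xd z dc Ysub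
        by (simp add: X.a_assoc[symmetric] X.r_neg X.a_assoc)
      moreover have "\<ominus>\<^bsub>X\<^esub> d \<oplus>\<^bsub>X\<^esub> y \<in> Y" using dY y submodD(3,4)[OF Y] by blast
      ultimately show "w \<in> qcoset X Y x" unfolding qcoset_def by blast
    qed
  qed
qed

lemma qc_Y_iff: assumes x: "x \<in> carrier X" shows "qcoset X Y x = Y \<longleftrightarrow> x \<in> Y"
proof -
  have "\<ominus>\<^bsub>X\<^esub> \<zero>\<^bsub>X\<^esub> = \<zero>\<^bsub>X\<^esub>" by (rule X.minus_equality) simp_all
  then have "x \<oplus>\<^bsub>X\<^esub> \<ominus>\<^bsub>X\<^esub> \<zero>\<^bsub>X\<^esub> = x" using X.r_zero[OF x] by metis
  then show ?thesis using qc_eq_iff[OF x X.zero_closed] qc_zero x by metis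
qed

lemma qc_add: assumes x: "x \<in> carrier X" and z: "z \<in> carrier X"
  shows "{a \<oplus>\<^bsub>X\<^esub> b | a b. a \<in> qcoset X Y x \<and> b \<in> qcoset X Y z} = qcoset X Y (x \<oplus>\<^bsub>X\<^esub> z)"
proof
  show "{a \<oplus>\<^bsub>X\<^esub> b | a b. a \<in> qcoset X Y x \<and> b \<in> qcoset X Y z} \<subseteq> qcoset X Y (x \<oplus>\<^bsub>X\<^esub> z)"
  proof clarify
    fix a b assume "a \<in> qcoset X Y x" "b \<in> qcoset X Y z"
    then obtain y1 y2 where y: "y1 \<in> Y" "y2 \<in> Y" "a = x \<oplus>\<^bsub>X\<^esub> y1" "b = z \<oplus>\<^bsub>X\<^esub> y2"
      unfolding qcoset_def by auto
    then have "a \<oplus>\<^bsub>X\<^esub> b = (x \<oplus>\<^bsub>X\<^esub> z) \<oplus>\<^bsub>X\<^esub> (y1 \<oplus>\<^bsub>X\<^esub> y2)"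
      using x z Ysub by (simp add: X.a_ac)
    moreover have "y1 \<oplus>\<^bsub>X\<^esub> y2 \<in> Y" using y submodD(3)[OF Y] by blast
    ultimately show "a \<oplus>\<^bsub>X\<^esub> b \<in> qcoset X Y (x \<oplus>\<^bsub>X\<^esub> z)" unfolding qcoset_def by blast
  qed
  show "qcoset X Y (x \<oplus>\<^bsub>X\<^esub> z) \<subseteq> {a \<oplus>\<^bsub>X\<^esub> b | a b. a \<in> qcoset X Y x \<and> b \<in> qcoset X Y z}"
  proof
    fix w assume "w \<in> qcoset X Y (x \<oplus>\<^bsub>X\<^esub> z)"
    then obtain y where y: "y \<in> Y" "w = (x \<oplus>\<^bsub>X\<^esub> z) \<oplus>\<^bsub>X\<^esub> y" unfolding qcoset_def by auto
    then have "w = x \<oplus>\<^bsub>X\<^esub> (z \<oplus>\<^bsub>X\<^esub> y)" using x z Ysub by (simp add: X.a_assoc)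
    moreover have "z \<oplus>\<^bsub>X\<^esub> y \<in> qcoset X Y z" using y unfolding qcoset_def by blast
    ultimately show "w \<in> {a \<oplus>\<^bsub>X\<^esub> b | a b. a \<in> qcoset X Y x \<and> b \<in> qcoset X Y z}"
      using qc_self[OF x] by blast
  qed
qed

lemma qc_sm: assumes x: "x \<in> carrier X" and r: "r \<in> carrier R"
  shows "{rsmult X a r \<oplus>\<^bsub>X\<^esub> y | a y. a \<in> qcoset X Y x \<and> y \<in> Y} = qcoset X Y (rsmult X x r)"
proof
  show "{rsmult X a r \<oplus>\<^bsub>X\<^esub> y | a y. a \<in> qcoset X Y x \<and> y \<in> Y} \<subseteq> qcoset X Y (rsmult X x r)"
  proof clarify
    fix a y assume "a \<in> qcoset X Y x" and y: "y \<in> Y"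
    then obtain y1 where y1: "y1 \<in> Y" "a = x \<oplus>\<^bsub>X\<^esub> y1" unfolding qcoset_def by auto
    then have "rsmult X a r \<oplus>\<^bsub>X\<^esub> y = rsmult X x r \<oplus>\<^bsub>X\<^esub> (rsmult X y1 r \<oplus>\<^bsub>X\<^esub> y)"
      using x r Ysub y rmod_sm_add[OF X] rmod_sm_closed[OF X] by (simp add: X.a_assoc)
    moreover have "rsmult X y1 r \<oplus>\<^bsub>X\<^esub> y \<in> Y" using y y1 r submodD(3,5)[OF Y] by blast
    ultimately show "rsmult X a r \<oplus>\<^bsub>X\<^esub> y \<in> qcoset X Y (rsmult X x r)" unfolding qcoset_def by blast
  qed
  show "qcoset X Y (rsmult X x r) \<subseteq> {rsmult X a r \<oplus>\<^bsub>X\<^esub> y | a y. a \<in> qcoset X Y x \<and> y \<in> Y}"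
    unfolding qcoset_def using qc_self[OF x] unfolding qcoset_def by blast
qed

end


lemma quot_simps:
  "qcoset (X\<lparr>carrier := S\<rparr>) Y = qcoset X Y"
  "carrier (quot (X\<lparr>carrier := S\<rparr>) Y) = qcoset X Y ` S"
  "add (quot (X\<lparr>carrier := S\<rparr>) Y) = (\<lambda>A B. {a \<oplus>\<^bsub>X\<^esub> b | a b. a \<in> A \<and> b \<in> B})"
  "rsmult (quot (X\<lparr>carrier := S\<rparr>) Y) = (\<lambda>A r. {rsmult X a r \<oplus>\<^bsub>X\<^esub> y | a y. a \<in> A \<and> y \<in> Y})"
proof -
  show q: "qcoset (X\<lparr>carrier := S\<rparr>) Y = qcoset X Y" by (rule ext) (simp add: qcoset_def)
  show "carrier (quot (X\<lparr>carrier := S\<rparr>) Y) = qcoset X Y ` S" by (simp add: quot_def q)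
  show "add (quot (X\<lparr>carrier := S\<rparr>) Y) = (\<lambda>A B. {a \<oplus>\<^bsub>X\<^esub> b | a b. a \<in> A \<and> b \<in> B})" by (simp add: quot_def)
  show "rsmult (quot (X\<lparr>carrier := S\<rparr>) Y) = (\<lambda>A r. {rsmult X a r \<oplus>\<^bsub>X\<^esub> y | a y. a \<in> A \<and> y \<in> Y})" by (simp add: quot_def)
qed

locale qsetup2 = qsetup +
  fixes S assumes S: "submod R X S" and YS: "Y \<subseteq> S"
begin

lemma Ssub: "x \<in> S \<Longrightarrow> x \<in> carrier X" using submodD(1)[OF S] by blast

lemma iso_kernel:
  assumes KS: "K \<subseteq> S" and iso: "riso R (quot (X\<lparr>carrier := S\<rparr>) Y) (X\<lparr>carrier := S\<rparr>\<lparr>carrier := K\<rparr>)"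
  obtains p where "\<And>x. x \<in> S \<Longrightarrow> p x \<in> K"
    "\<And>x z. x \<in> S \<Longrightarrow> z \<in> S \<Longrightarrow> p (x \<oplus>\<^bsub>X\<^esub> z) = p x \<oplus>\<^bsub>X\<^esub> p z"
    "\<And>x r. x \<in> S \<Longrightarrow> r \<in> carrier R \<Longrightarrow> p (rsmult X x r) = rsmult X (p x) r"
    "\<And>x. x \<in> S \<Longrightarrow> p x = \<zero>\<^bsub>X\<^esub> \<longleftrightarrow> x \<in> Y"
proof -
  let ?Q = "quot (X\<lparr>carrier := S\<rparr>) Y" and ?T = "X\<lparr>carrier := S\<rparr>\<lparr>carrier := K\<rparr>"
  obtain \<theta> where hom: "rhom R ?Q ?T \<theta>" and bij: "bij_betw \<theta> (carrier ?Q) (carrier ?T)"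
    using iso unfolding riso_def by blast
  have Qc: "carrier ?Q = qcoset X Y ` S" by (rule quot_simps(2))
  have Tc: "carrier ?T = K" by simp
  have Ta: "add ?T = add X" by simp
  have Ts: "rsmult ?T = rsmult X" by simp
  have h1: "\<theta> A \<in> carrier ?T" if "A \<in> carrier ?Q" for A using hom that unfolding rhom_def by blast
  have h2: "\<theta> (A \<oplus>\<^bsub>?Q\<^esub> B) = \<theta> A \<oplus>\<^bsub>?T\<^esub> \<theta> B" if "A \<in> carrier ?Q" "B \<in> carrier ?Q" for A B
    using hom that unfolding rhom_def by blast
  have h3: "\<theta> (rsmult ?Q A r) = rsmult ?T (\<theta> A) r" if "A \<in> carrier ?Q" "r \<in> carrier R" for A r
    using hom that unfolding rhom_def by blast
  have inQ: "qcoset X Y x \<in> carrier ?Q" if "x \<in> S" for x unfolding Qc using that by (rule imageI)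
  have th_in: "\<theta> (qcoset X Y x) \<in> K" if "x \<in> S" for x using h1[OF inQ[OF that]] Tc by simp
  have th_add: "\<theta> (qcoset X Y (x \<oplus>\<^bsub>X\<^esub> z)) = \<theta> (qcoset X Y x) \<oplus>\<^bsub>X\<^esub> \<theta> (qcoset X Y z)"
    if x: "x \<in> S" and z: "z \<in> S" for x z
  proof -
    have "qcoset X Y x \<oplus>\<^bsub>?Q\<^esub> qcoset X Y z = qcoset X Y (x \<oplus>\<^bsub>X\<^esub> z)"
      unfolding quot_simps(3) using qc_add[OF Ssub[OF x] Ssub[OF z]] by simp
    then show ?thesis using h2[OF inQ[OF x] inQ[OF z]] Ta by simp
  qed
  have th_sm: "\<theta> (qcoset X Y (rsmult X x r)) = rsmult X (\<theta> (qcoset X Y x)) r"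
    if x: "x \<in> S" and r: "r \<in> carrier R" for x r
  proof -
    have "rsmult ?Q (qcoset X Y x) r = qcoset X Y (rsmult X x r)"
      unfolding quot_simps(4) using qc_sm[OF Ssub[OF x] r] by simp
    then show ?thesis using h3[OF inQ[OF x] r] Ts by simp
  qed
  have z0: "\<zero>\<^bsub>X\<^esub> \<in> S" using submodD(2)[OF S] .
  have thY: "\<theta> Y = \<zero>\<^bsub>X\<^esub>"
  proof -
    have e: "\<theta> (qcoset X Y \<zero>\<^bsub>X\<^esub>) \<oplus>\<^bsub>X\<^esub> \<theta> (qcoset X Y \<zero>\<^bsub>X\<^esub>) = \<theta> (qcoset X Y \<zero>\<^bsub>X\<^esub>)"
      using th_add[OF z0 z0] by simp
    have c: "\<theta> (qcoset X Y \<zero>\<^bsub>X\<^esub>) \<in> carrier X" using th_in[OF z0] KS Ssub by blast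
    have "\<theta> (qcoset X Y \<zero>\<^bsub>X\<^esub>) = \<zero>\<^bsub>X\<^esub>" using X.add.r_cancel_one[OF c c] e by simp
    then show ?thesis using qc_zero by simp
  qed
  have inj: "inj_on \<theta> (carrier ?Q)" using bij unfolding bij_betw_def by (rule conjunct1)
  show thesis
  proof (rule that[of "\<lambda>x. \<theta> (qcoset X Y x)"])
    show "\<theta> (qcoset X Y x) \<in> K" if "x \<in> S" for x using th_in that by blast
    show "\<theta> (qcoset X Y (x \<oplus>\<^bsub>X\<^esub> z)) = \<theta> (qcoset X Y x) \<oplus>\<^bsub>X\<^esub> \<theta> (qcoset X Y z)"
      if "x \<in> S" "z \<in> S" for x z using th_add that by blast
    show "\<theta> (qcoset X Y (rsmult X x r)) = rsmult X (\<theta> (qcoset X Y x)) r"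
      if "x \<in> S" "r \<in> carrier R" for x r using th_sm that by blast
    show "\<theta> (qcoset X Y x) = \<zero>\<^bsub>X\<^esub> \<longleftrightarrow> x \<in> Y" if x: "x \<in> S" for x
    proof -
      have "\<theta> (qcoset X Y x) = \<theta> (qcoset X Y \<zero>\<^bsub>X\<^esub>) \<longleftrightarrow> qcoset X Y x = qcoset X Y \<zero>\<^bsub>X\<^esub>"
        using inj_on_eq_iff[OF inj inQ[OF x] inQ[OF z0]] .
      then show ?thesis using thY qc_zero qc_Y_iff[OF Ssub[OF x]] by simp
    qed
  qed
qed

lemma first_iso:
  assumes TS: "T \<subseteq> S" and hT: "\<And>x. x \<in> S \<Longrightarrow> h x \<in> T" and hS: "h ` S = T"
    and hadd: "\<And>x z. x \<in> S \<Longrightarrow> z \<in> S \<Longrightarrow> h (x \<oplus>\<^bsub>X\<^esub> z) = h x \<oplus>\<^bsub>X\<^esub> h z"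
    and hsm: "\<And>x r. x \<in> S \<Longrightarrow> r \<in> carrier R \<Longrightarrow> h (rsmult X x r) = rsmult X (h x) r"
    and hker: "\<And>x. x \<in> S \<Longrightarrow> h x = \<zero>\<^bsub>X\<^esub> \<longleftrightarrow> x \<in> Y"
  shows "riso R (quot (X\<lparr>carrier := S\<rparr>) Y) (X\<lparr>carrier := S\<rparr>\<lparr>carrier := T\<rparr>)"
proof -
  define \<theta> where "\<theta> A = h (SOME x. x \<in> S \<and> A = qcoset X Y x)" for A
  have negS: "\<ominus>\<^bsub>X\<^esub> x \<in> S" if "x \<in> S" for x using submodD(4)[OF S] that by blast
  have h0: "h \<zero>\<^bsub>X\<^esub> = \<zero>\<^bsub>X\<^esub>" using hker submodD(2)[OF Y] YS by blast
  have hdiff: "h (x \<oplus>\<^bsub>X\<^esub> \<ominus>\<^bsub>X\<^esub> z) = \<zero>\<^bsub>X\<^esub>" if "x \<in> S" "z \<in> S" "h x = h z" for x z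
  proof -
    have "h (x \<oplus>\<^bsub>X\<^esub> \<ominus>\<^bsub>X\<^esub> z) = h z \<oplus>\<^bsub>X\<^esub> h (\<ominus>\<^bsub>X\<^esub> z)" using hadd negS that by simp
    also have "\<dots> = h (z \<oplus>\<^bsub>X\<^esub> \<ominus>\<^bsub>X\<^esub> z)" using hadd negS that by simp
    also have "\<dots> = \<zero>\<^bsub>X\<^esub>" using h0 Ssub that by (simp add: X.r_neg)
    finally show ?thesis .
  qed
  have th: "\<theta> (qcoset X Y x) = h x" if x: "x \<in> S" for x
  proof -
    define x' where "x' = (SOME x'. x' \<in> S \<and> qcoset X Y x = qcoset X Y x')"
    have x': "x' \<in> S \<and> qcoset X Y x = qcoset X Y x'"
      unfolding x'_def by (rule someI[of _ x]) (use x in simp)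
    have "x' \<oplus>\<^bsub>X\<^esub> \<ominus>\<^bsub>X\<^esub> x \<in> Y" using x' qc_eq_iff Ssub x by metis
    then have d: "h (x' \<oplus>\<^bsub>X\<^esub> \<ominus>\<^bsub>X\<^esub> x) = \<zero>\<^bsub>X\<^esub>" using hker YS by blast
    have dS: "x' \<oplus>\<^bsub>X\<^esub> \<ominus>\<^bsub>X\<^esub> x \<in> S" using x' x negS submodD(3)[OF S] by blast
    have "x' = (x' \<oplus>\<^bsub>X\<^esub> \<ominus>\<^bsub>X\<^esub> x) \<oplus>\<^bsub>X\<^esub> x" using x' x Ssub by (simp add: X.a_assoc X.l_neg)
    then have "h x' = h (x' \<oplus>\<^bsub>X\<^esub> \<ominus>\<^bsub>X\<^esub> x) \<oplus>\<^bsub>X\<^esub> h x" using hadd dS x by metis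
    moreover have "h x \<in> carrier X" using hT[OF x] TS Ssub by blast
    ultimately have "h x' = h x" using d by simp
    then show ?thesis unfolding \<theta>_def x'_def[symmetric] by simp
  qed
  let ?Q = "quot (X\<lparr>carrier := S\<rparr>) Y" and ?T = "X\<lparr>carrier := S\<rparr>\<lparr>carrier := T\<rparr>"
  have Qc: "carrier ?Q = qcoset X Y ` S" by (rule quot_simps(2))
  have Tc: "carrier ?T = T" by simp
  have Ta: "add ?T = add X" by simp
  have Ts: "rsmult ?T = rsmult X" by simp
  show ?thesis unfolding riso_def
  proof (intro exI conjI)
    show "rhom R ?Q ?T \<theta>"
      unfolding rhom_def
    proof (intro conjI ballI)
      show "\<theta> \<in> carrier ?Q \<rightarrow> carrier ?T"
      proof
        fix A assume "A \<in> carrier ?Q"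
        then obtain x where x: "x \<in> S" "A = qcoset X Y x" unfolding Qc by blast
        show "\<theta> A \<in> carrier ?T" unfolding Tc x(2) th[OF x(1)] by (rule hT[OF x(1)])
      qed
      fix A B assume A: "A \<in> carrier ?Q" and B: "B \<in> carrier ?Q"
      then obtain x z where xz: "x \<in> S" "z \<in> S" "A = qcoset X Y x" "B = qcoset X Y z" unfolding Qc by blast
      have xzS: "x \<oplus>\<^bsub>X\<^esub> z \<in> S" using xz submodD(3)[OF S] by blast
      have "A \<oplus>\<^bsub>?Q\<^esub> B = qcoset X Y (x \<oplus>\<^bsub>X\<^esub> z)"
        unfolding quot_simps(3) xz using qc_add[OF Ssub[OF xz(1)] Ssub[OF xz(2)]] by simp
      then show "\<theta> (A \<oplus>\<^bsub>?Q\<^esub> B) = \<theta> A \<oplus>\<^bsub>?T\<^esub> \<theta> B"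
        unfolding Ta using th[OF xzS] th[OF xz(1)] th[OF xz(2)] hadd[OF xz(1,2)] xz(3,4) by simp
    next
      fix A r assume A: "A \<in> carrier ?Q" and r: "r \<in> carrier R"
      then obtain x where x: "x \<in> S" "A = qcoset X Y x" unfolding Qc by blast
      have xS: "rsmult X x r \<in> S" using x r submodD(5)[OF S] by blast
      have "rsmult ?Q A r = qcoset X Y (rsmult X x r)"
        unfolding quot_simps(4) x(2) using qc_sm[OF Ssub[OF x(1)] r] by simp
      then show "\<theta> (rsmult ?Q A r) = rsmult ?T (\<theta> A) r"
        unfolding Ts using th[OF xS] th[OF x(1)] hsm[OF x(1) r] x(2) by simp
    qed
    show "bij_betw \<theta> (carrier ?Q) (carrier ?T)"
      unfolding bij_betw_def
    proof (intro conjI)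
      show "inj_on \<theta> (carrier ?Q)"
      proof (rule inj_onI)
        fix A B assume A: "A \<in> carrier ?Q" and B: "B \<in> carrier ?Q" and e: "\<theta> A = \<theta> B"
        from A B obtain x z where xz: "x \<in> S" "z \<in> S" "A = qcoset X Y x" "B = qcoset X Y z" unfolding Qc by blast
        have "h x = h z" using e th[OF xz(1)] th[OF xz(2)] xz(3,4) by simp
        then have "h (x \<oplus>\<^bsub>X\<^esub> \<ominus>\<^bsub>X\<^esub> z) = \<zero>\<^bsub>X\<^esub>" using hdiff xz(1,2) by blast
        moreover have "x \<oplus>\<^bsub>X\<^esub> \<ominus>\<^bsub>X\<^esub> z \<in> S" using xz negS submodD(3)[OF S] by blast
        ultimately have "x \<oplus>\<^bsub>X\<^esub> \<ominus>\<^bsub>X\<^esub> z \<in> Y" using hker by blast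
        then show "A = B" using qc_eq_iff[OF Ssub[OF xz(1)] Ssub[OF xz(2)]] xz(3,4) by simp
      qed
      show "\<theta> ` carrier ?Q = carrier ?T"
      proof
        show "\<theta> ` carrier ?Q \<subseteq> carrier ?T"
        proof
          fix w assume "w \<in> \<theta> ` carrier ?Q"
          then obtain x where x: "x \<in> S" "w = \<theta> (qcoset X Y x)" unfolding Qc by blast
          show "w \<in> carrier ?T" unfolding Tc x(2) th[OF x(1)] by (rule hT[OF x(1)])
        qed
        show "carrier ?T \<subseteq> \<theta> ` carrier ?Q"
        proof
          fix w assume "w \<in> carrier ?T"
          then have "w \<in> h ` S" using hS Tc by simp
          then obtain x where x: "x \<in> S" "w = h x" by blast
          then have "w = \<theta> (qcoset X Y x)" using th by simp
          moreover have "qcoset X Y x \<in> carrier ?Q" unfolding Qc using x(1) by (rule imageI)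
          ultimately show "w \<in> \<theta> ` carrier ?Q" by blast
        qed
      qed
    qed
  qed
qed

end


definition trunc :: "('a, 'b) rmodule \<Rightarrow> nat \<Rightarrow> (nat \<Rightarrow> 'b) \<Rightarrow> nat \<Rightarrow> 'b" where
  "trunc M m f = (\<lambda>i. if i < m then f i else \<zero>\<^bsub>M\<^esub>)"

lemma trunc_carrier: "f \<in> carrier (dpow M k) \<Longrightarrow> m \<le> k \<Longrightarrow> trunc M m f \<in> carrier (dpow M m)"
  by (auto simp: trunc_def dpow_carrier)

lemma trunc_id: "f \<in> carrier (dpow M m) \<Longrightarrow> trunc M m f = f"
  by (rule ext) (auto simp: trunc_def dpow_carrier)

lemma trunc_add: assumes "abelian_group M"
  shows "trunc M m (f \<oplus>\<^bsub>dpow M k\<^esub> f') = trunc M m f \<oplus>\<^bsub>dpow M m\<^esub> trunc M m f'"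
proof -
  interpret M: abelian_group M by fact
  show ?thesis unfolding dpow_add trunc_def by (rule ext) simp
qed

lemma trunc_sm: assumes "rmod R M" "r \<in> carrier R"
  shows "trunc M m (rsmult (dpow M k) f r) = rsmult (dpow M m) (trunc M m f) r"
  unfolding dpow_sm trunc_def by (rule ext) (simp add: rmod_sm_zero[OF assms])

lemma dpow_add_eq: "add (dpow M n) = add (dpow M k)" by (simp add: dpow_add)
lemma dpow_sm_eq: "rsmult (dpow M n) = rsmult (dpow M k)" by (simp add: dpow_sm)
lemma dpow_zero_eq: "zero (dpow M n) = zero (dpow M k)" by (simp add: dpow_zero)

lemma direct_summandD:
  assumes "direct_summand R M K"
  obtains L where "submod R M K" "submod R M L" "K \<inter> L = {\<zero>\<^bsub>M\<^esub>}"
     "{k \<oplus>\<^bsub>M\<^esub> l | k l. k \<in> K \<and> l \<in> L} = carrier M"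
  using assms unfolding direct_summand_def by blast

lemma dir1:
  fixes R :: "'a ring" and M :: "('a, 'b) rmodule"
  assumes M: "rmod R M" and fsr: "fin_sigma_rickart R M"
  shows "add_fg_D2 R M TYPE('c)"
  unfolding add_fg_D2_def
proof (intro allI impI conjI, elim conjE)
  fix X :: "('a, 'c) rmodule" and S
  assume X: "rmod R X" and inadd: "in_add R M X" and S: "submod R X S"
    and fg: "fin_Mgen R M (X\<lparr>carrier := S\<rparr>)"
  interpret Mg: abelian_group M using rmod_ab[OF M] .
  interpret Xg: abelian_group X using rmod_ab[OF X] .
  have Ssub: "x \<in> S \<Longrightarrow> x \<in> carrier X" for x using submodD(1)[OF S] by blast
  obtain n K0 \<iota> where n: "n > 0" and K0: "direct_summand R (dpow M n) K0"
    and \<iota>: "rhom R X ((dpow M n)\<lparr>carrier := K0\<rparr>) \<iota>"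
    and \<iota>bij: "bij_betw \<iota> (carrier X) K0"
    using inadd unfolding in_add_def riso_def by auto
  obtain m g where m: "m > 0" and g: "rhom R (dpow M m) (X\<lparr>carrier := S\<rparr>) g"
    and gS: "g ` carrier (dpow M m) = S"
    using fg unfolding fin_Mgen_def by auto
  have gg: "rhom R (dpow M m) X g \<and> g \<in> carrier (dpow M m) \<rightarrow> S"
    using g rhom_restr[OF submodD(1)[OF S]] by blast
  have gX: "rhom R (dpow M m) X g" and gin: "g \<in> carrier (dpow M m) \<rightarrow> S"
    using gg by blast+
  define k where "k = max m n"
  have k: "k > 0" "m \<le> k" "n \<le> k" using m n unfolding k_def by auto
  have K0sub: "submod R (dpow M n) K0" using K0 unfolding direct_summand_def by blast
  have K0c: "K0 \<subseteq> carrier (dpow M k)"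
    using submodD(1)[OF K0sub] dpow_mono[OF Mg.abelian_group_axioms k(3)] by blast
  have Dk: "abelian_group (dpow M k)" using dpow_ab[OF Mg.abelian_group_axioms] .
  have Dm: "abelian_group (dpow M m)" using dpow_ab[OF Mg.abelian_group_axioms] .
  have Dn0: "abelian_group ((dpow M n)\<lparr>carrier := K0\<rparr>)"
    using sub_ab[OF dpow_ab[OF Mg.abelian_group_axioms] K0sub] .
  have \<iota>in: "\<iota> x \<in> K0" if "x \<in> carrier X" for x using \<iota>bij that unfolding bij_betw_def by blast
  have \<iota>add: "\<iota> (x \<oplus>\<^bsub>X\<^esub> y) = \<iota> x \<oplus>\<^bsub>dpow M k\<^esub> \<iota> y" if "x \<in> carrier X" "y \<in> carrier X" for x y
    using \<iota> that dpow_add_eq[of M n k] unfolding rhom_def by simp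
  have \<iota>sm: "\<iota> (rsmult X x r) = rsmult (dpow M k) (\<iota> x) r" if "x \<in> carrier X" "r \<in> carrier R" for x r
    using \<iota> that dpow_sm_eq[of M n k] unfolding rhom_def by simp
  have \<iota>0: "\<iota> \<zero>\<^bsub>X\<^esub> = \<zero>\<^bsub>dpow M k\<^esub>"
    using rhom_zero[OF Xg.abelian_group_axioms Dn0 \<iota>] dpow_zero_eq[of M n k] by simp
  have \<iota>inj: "inj_on \<iota> (carrier X)" using \<iota>bij unfolding bij_betw_def by blast
  define G where "G f = g (trunc M m f)" for f
  have Gin: "G f \<in> S" if "f \<in> carrier (dpow M k)" for f
    unfolding G_def using gin trunc_carrier[OF that k(2)] by blast
  have Gadd: "G (f \<oplus>\<^bsub>dpow M k\<^esub> f') = G f \<oplus>\<^bsub>X\<^esub> G f'"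
    if "f \<in> carrier (dpow M k)" "f' \<in> carrier (dpow M k)" for f f'
    unfolding G_def trunc_add[OF Mg.abelian_group_axioms]
    using gX trunc_carrier[OF that(1) k(2)] trunc_carrier[OF that(2) k(2)] unfolding rhom_def by blast
  have Gsm: "G (rsmult (dpow M k) f r) = rsmult X (G f) r"
    if "f \<in> carrier (dpow M k)" "r \<in> carrier R" for f r
    unfolding G_def trunc_sm[OF M that(2)]
    using gX trunc_carrier[OF that(1) k(2)] that(2) unfolding rhom_def by blast
  have GX: "G \<in> carrier (dpow M k) \<rightarrow> carrier X" using Gin Ssub by blast
  have G0: "G \<zero>\<^bsub>dpow M k\<^esub> = \<zero>\<^bsub>X\<^esub>" by (rule addhom_zero[OF Dk Xg.abelian_group_axioms GX]) (rule Gadd)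
  have Gneg: "G (\<ominus>\<^bsub>dpow M k\<^esub> f) = \<ominus>\<^bsub>X\<^esub> G f" if "f \<in> carrier (dpow M k)" for f
    by (rule addhom_neg[OF Dk Xg.abelian_group_axioms GX]) (rule Gadd, assumption+, rule that)
  have Gg: "G f = g f" if "f \<in> carrier (dpow M m)" for f unfolding G_def trunc_id[OF that] ..
  show "D2 R (X\<lparr>carrier := S\<rparr>)" unfolding D2_def
  proof (intro allI impI, elim conjE exE)
    fix Y K assume YN: "submod R (X\<lparr>carrier := S\<rparr>) Y" and KN: "direct_summand R (X\<lparr>carrier := S\<rparr>) K"
      and iso: "riso R (quot (X\<lparr>carrier := S\<rparr>) Y) (X\<lparr>carrier := S\<rparr>\<lparr>carrier := K\<rparr>)"
    have Y: "submod R X Y" and YS: "Y \<subseteq> S" using YN submod_sub[OF Xg.abelian_group_axioms S] by auto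
    have KS: "K \<subseteq> S" using KN submod_sub[OF Xg.abelian_group_axioms S] unfolding direct_summand_def by auto
    interpret q: qsetup2 R X Y S by unfold_locales (fact X Y S YS)+
    obtain p where pK: "\<And>x. x \<in> S \<Longrightarrow> p x \<in> K"
      and padd: "\<And>x z. x \<in> S \<Longrightarrow> z \<in> S \<Longrightarrow> p (x \<oplus>\<^bsub>X\<^esub> z) = p x \<oplus>\<^bsub>X\<^esub> p z"
      and psm: "\<And>x r. x \<in> S \<Longrightarrow> r \<in> carrier R \<Longrightarrow> p (rsmult X x r) = rsmult X (p x) r"
      and pker: "\<And>x. x \<in> S \<Longrightarrow> p x = \<zero>\<^bsub>X\<^esub> \<longleftrightarrow> x \<in> Y"
      using q.iso_kernel[OF KS iso] by blast
    have pX: "p x \<in> carrier X" if "x \<in> S" for x using pK[OF that] KS Ssub by blast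
    define \<psi> where "\<psi> f = \<iota> (p (G f))" for f
    have \<psi>hom: "rhom R (dpow M k) (dpow M k) \<psi>"
      unfolding rhom_def
    proof (intro conjI ballI)
      show "\<psi> \<in> carrier (dpow M k) \<rightarrow> carrier (dpow M k)"
        unfolding \<psi>_def using \<iota>in pX Gin K0c by blast
      fix f f' assume f: "f \<in> carrier (dpow M k)" and f': "f' \<in> carrier (dpow M k)"
      show "\<psi> (f \<oplus>\<^bsub>dpow M k\<^esub> f') = \<psi> f \<oplus>\<^bsub>dpow M k\<^esub> \<psi> f'"
        unfolding \<psi>_def Gadd[OF f f'] padd[OF Gin[OF f] Gin[OF f']]
        using \<iota>add pX Gin f f' by blast
    next
      fix f r assume f: "f \<in> carrier (dpow M k)" and r: "r \<in> carrier R"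
      show "\<psi> (rsmult (dpow M k) f r) = rsmult (dpow M k) (\<psi> f) r"
        unfolding \<psi>_def Gsm[OF f r] psm[OF Gin[OF f] r]
        using \<iota>sm pX Gin f r by blast
    qed
    have rk: "rickart R (dpow M k)" using fsr k(1) unfolding fin_sigma_rickart_def by blast
    have ds: "direct_summand R (dpow M k) (rker (dpow M k) (dpow M k) \<psi>)"
      using rk \<psi>hom unfolding rickart_def by blast
    have rker_eq: "rker (dpow M k) (dpow M k) \<psi> = {f \<in> carrier (dpow M k). G f \<in> Y}"
    proof -
      have "\<psi> f = \<zero>\<^bsub>dpow M k\<^esub> \<longleftrightarrow> G f \<in> Y" if f: "f \<in> carrier (dpow M k)" for f
      proof -
        have "\<psi> f = \<zero>\<^bsub>dpow M k\<^esub> \<longleftrightarrow> \<iota> (p (G f)) = \<iota> \<zero>\<^bsub>X\<^esub>" unfolding \<psi>_def \<iota>0 ..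
        also have "\<dots> \<longleftrightarrow> p (G f) = \<zero>\<^bsub>X\<^esub>"
          using inj_on_eq_iff[OF \<iota>inj pX[OF Gin[OF f]] Xg.zero_closed] .
        also have "\<dots> \<longleftrightarrow> G f \<in> Y" using pker[OF Gin[OF f]] .
        finally show ?thesis .
      qed
      then show ?thesis unfolding rker_def by blast
    qed
    obtain C where A: "submod R (dpow M k) (rker (dpow M k) (dpow M k) \<psi>)" and C: "submod R (dpow M k) C"
      and AC: "rker (dpow M k) (dpow M k) \<psi> \<inter> C = {\<zero>\<^bsub>dpow M k\<^esub>}"
      and AC2: "{a \<oplus>\<^bsub>dpow M k\<^esub> c | a c. a \<in> rker (dpow M k) (dpow M k) \<psi> \<and> c \<in> C} = carrier (dpow M k)"
      using direct_summandD[OF ds] by blast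
    have Cc: "c \<in> C \<Longrightarrow> c \<in> carrier (dpow M k)" for c using submodD(1)[OF C] by blast
    define L where "L = G ` C"
    have LS: "L \<subseteq> S" unfolding L_def using Gin Cc by blast
    have L: "submod R X L" unfolding submod_def
    proof (intro conjI ballI)
      show "L \<subseteq> carrier X" using LS Ssub by blast
      show "\<zero>\<^bsub>X\<^esub> \<in> L" unfolding L_def using G0 submodD(2)[OF C] by force
      fix x y assume "x \<in> L" "y \<in> L"
      then obtain c c' where c: "c \<in> C" "c' \<in> C" "x = G c" "y = G c'" unfolding L_def by blast
      have "x \<oplus>\<^bsub>X\<^esub> y = G (c \<oplus>\<^bsub>dpow M k\<^esub> c')" using Gadd Cc c by simp
      moreover have "c \<oplus>\<^bsub>dpow M k\<^esub> c' \<in> C" using submodD(3)[OF C] c by blast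
      ultimately show "x \<oplus>\<^bsub>X\<^esub> y \<in> L" unfolding L_def by blast
    next
      fix x assume "x \<in> L"
      then obtain c where c: "c \<in> C" "x = G c" unfolding L_def by blast
      have "\<ominus>\<^bsub>X\<^esub> x = G (\<ominus>\<^bsub>dpow M k\<^esub> c)" using Gneg Cc c by simp
      moreover have "\<ominus>\<^bsub>dpow M k\<^esub> c \<in> C" using submodD(4)[OF C] c by blast
      ultimately show "\<ominus>\<^bsub>X\<^esub> x \<in> L" unfolding L_def by blast
    next
      fix x r assume "x \<in> L" and r: "r \<in> carrier R"
      then obtain c where c: "c \<in> C" "x = G c" unfolding L_def by blast
      have "rsmult X x r = G (rsmult (dpow M k) c r)" using Gsm Cc c r by simp
      moreover have "rsmult (dpow M k) c r \<in> C" using submodD(5)[OF C] c r by blast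
      ultimately show "rsmult X x r \<in> L" unfolding L_def by blast
    qed
    show "direct_summand R (X\<lparr>carrier := S\<rparr>) Y"
      unfolding direct_summand_def
    proof (intro conjI exI)
      show "submod R (X\<lparr>carrier := S\<rparr>) Y" by fact
      show "submod R (X\<lparr>carrier := S\<rparr>) L" using submod_sub[OF Xg.abelian_group_axioms S] L LS by blast
      show "Y \<inter> L = {\<zero>\<^bsub>X\<lparr>carrier := S\<rparr>\<^esub>}"
      proof
        show "{\<zero>\<^bsub>X\<lparr>carrier := S\<rparr>\<^esub>} \<subseteq> Y \<inter> L" using submodD(2)[OF Y] submodD(2)[OF L] by simp
        show "Y \<inter> L \<subseteq> {\<zero>\<^bsub>X\<lparr>carrier := S\<rparr>\<^esub>}"
        proof
          fix w assume w: "w \<in> Y \<inter> L"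
          then obtain c where c: "c \<in> C" "w = G c" unfolding L_def by blast
          then have "c \<in> rker (dpow M k) (dpow M k) \<psi>" unfolding rker_eq using w Cc by blast
          then have "c = \<zero>\<^bsub>dpow M k\<^esub>" using AC c by blast
          then show "w \<in> {\<zero>\<^bsub>X\<lparr>carrier := S\<rparr>\<^esub>}" using c G0 by simp
        qed
      qed
      show "{a \<oplus>\<^bsub>X\<lparr>carrier := S\<rparr>\<^esub> b | a b. a \<in> Y \<and> b \<in> L} = carrier (X\<lparr>carrier := S\<rparr>)"
      proof
        show "{a \<oplus>\<^bsub>X\<lparr>carrier := S\<rparr>\<^esub> b | a b. a \<in> Y \<and> b \<in> L} \<subseteq> carrier (X\<lparr>carrier := S\<rparr>)"
          using submodD(3)[OF S] YS LS by auto
        show "carrier (X\<lparr>carrier := S\<rparr>) \<subseteq> {a \<oplus>\<^bsub>X\<lparr>carrier := S\<rparr>\<^esub> b | a b. a \<in> Y \<and> b \<in> L}"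
        proof
          fix x assume "x \<in> carrier (X\<lparr>carrier := S\<rparr>)"
          then have "x \<in> g ` carrier (dpow M m)" using gS by simp
          then obtain f where f: "f \<in> carrier (dpow M m)" "x = g f" by blast
          have fk: "f \<in> carrier (dpow M k)" using f(1) dpow_mono[OF Mg.abelian_group_axioms k(2)] by blast
          then obtain a c where ac: "a \<in> rker (dpow M k) (dpow M k) \<psi>" "c \<in> C" "f = a \<oplus>\<^bsub>dpow M k\<^esub> c"
            using AC2 by blast
          have a: "a \<in> carrier (dpow M k)" "G a \<in> Y" using ac(1) unfolding rker_eq by auto
          have "x = G a \<oplus>\<^bsub>X\<^esub> G c" using f(2) Gg[OF f(1)] ac(3) Gadd[OF a(1) Cc[OF ac(2)]] by simp
          moreover have "G c \<in> L" unfolding L_def using ac(2) by blast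
          ultimately show "x \<in> {a \<oplus>\<^bsub>X\<lparr>carrier := S\<rparr>\<^esub> b | a b. a \<in> Y \<and> b \<in> L}" using a(2) by auto
        qed
      qed
    qed
  qed
qed


definition hi :: "('a, 'b) rmodule \<Rightarrow> nat \<Rightarrow> (nat \<Rightarrow> 'b) \<Rightarrow> nat \<Rightarrow> 'b" where
  "hi M n f = (\<lambda>i. if i < n then f (i + n) else \<zero>\<^bsub>M\<^esub>)"

definition up :: "('a, 'b) rmodule \<Rightarrow> nat \<Rightarrow> (nat \<Rightarrow> 'b) \<Rightarrow> nat \<Rightarrow> 'b" where
  "up M n g = (\<lambda>i. if n \<le> i \<and> i < n + n then g (i - n) else \<zero>\<^bsub>M\<^esub>)"

context
  fixes M :: "('a, 'b) rmodule" and n :: nat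
  assumes Mab: "abelian_group M"
begin

interpretation Mg: abelian_group M by (rule Mab)

lemma hi_carrier: "f \<in> carrier (dpow M (n+n)) \<Longrightarrow> hi M n f \<in> carrier (dpow M n)"
  by (auto simp: hi_def dpow_carrier)

lemma up_carrier: assumes "g \<in> carrier (dpow M n)" shows "up M n g \<in> carrier (dpow M (n+n))"
proof -
  have "up M n g i \<in> carrier M" if "i < n + n" for i
    using assms that by (auto simp: up_def dpow_carrier)
  then show ?thesis by (auto simp: up_def dpow_carrier)
qed

lemma lo_carrier: "f \<in> carrier (dpow M (n+n)) \<Longrightarrow> trunc M n f \<in> carrier (dpow M n)"
  by (rule trunc_carrier) auto

lemma small_carrier: "g \<in> carrier (dpow M n) \<Longrightarrow> g \<in> carrier (dpow M (n+n))"
  using dpow_mono[OF Mab, of n "n+n"] by auto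

lemma decomp: assumes f: "f \<in> carrier (dpow M (n+n))"
  shows "f = trunc M n f \<oplus>\<^bsub>dpow M (n+n)\<^esub> up M n (hi M n f)"
  unfolding dpow_add
proof (rule ext)
  fix i
  have c: "i < n + n \<Longrightarrow> f i \<in> carrier M" using f by (auto simp: dpow_carrier)
  have z: "\<not> i < n + n \<Longrightarrow> f i = \<zero>\<^bsub>M\<^esub>" using f by (auto simp: dpow_carrier)
  show "f i = trunc M n f i \<oplus>\<^bsub>M\<^esub> up M n (hi M n f) i"
    using c z by (cases "i < n"; cases "i < n + n") (auto simp: trunc_def up_def hi_def)
qed

lemma lo_up: "trunc M n (up M n g) = (\<lambda>i. \<zero>\<^bsub>M\<^esub>)"
  by (rule ext) (auto simp: trunc_def up_def)

lemma hi_up: "g \<in> carrier (dpow M n) \<Longrightarrow> hi M n (up M n g) = g"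
  by (rule ext) (auto simp: hi_def up_def dpow_carrier)

lemma hi_small: "g \<in> carrier (dpow M n) \<Longrightarrow> hi M n g = (\<lambda>i. \<zero>\<^bsub>M\<^esub>)"
  by (rule ext) (auto simp: hi_def dpow_carrier)

lemma hi_add: "hi M n (f \<oplus>\<^bsub>dpow M k\<^esub> f') = hi M n f \<oplus>\<^bsub>dpow M k'\<^esub> hi M n f'"
  unfolding dpow_add hi_def by (rule ext) simp

lemma up_add: "up M n (f \<oplus>\<^bsub>dpow M k\<^esub> f') = up M n f \<oplus>\<^bsub>dpow M k'\<^esub> up M n f'"
  unfolding dpow_add up_def by (rule ext) simp

lemma up_zero: "up M n (\<lambda>i. \<zero>\<^bsub>M\<^esub>) = (\<lambda>i. \<zero>\<^bsub>M\<^esub>)"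
  unfolding up_def by (rule ext) simp

lemma up_inj0: assumes "g \<in> carrier (dpow M n)" "up M n g = (\<lambda>i. \<zero>\<^bsub>M\<^esub>)"
  shows "g = (\<lambda>i. \<zero>\<^bsub>M\<^esub>)"
proof -
  have "g = hi M n (up M n g)" using hi_up[OF assms(1)] by simp
  also have "\<dots> = (\<lambda>i. \<zero>\<^bsub>M\<^esub>)" unfolding assms(2) hi_def by (rule ext) simp
  finally show ?thesis .
qed

end

lemma hi_sm: assumes "rmod R M" "r \<in> carrier R"
  shows "hi M n (rsmult (dpow M k) f r) = rsmult (dpow M k') (hi M n f) r"
  unfolding dpow_sm hi_def by (rule ext) (simp add: rmod_sm_zero[OF assms])

lemma up_sm: assumes "rmod R M" "r \<in> carrier R"
  shows "up M n (rsmult (dpow M k) f r) = rsmult (dpow M k') (up M n f) r"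
  unfolding dpow_sm up_def by (rule ext) (simp add: rmod_sm_zero[OF assms])


lemma rhomD: assumes "rhom R A B T"
  shows "\<And>x. x \<in> carrier A \<Longrightarrow> T x \<in> carrier B"
    "\<And>x y. x \<in> carrier A \<Longrightarrow> y \<in> carrier A \<Longrightarrow> T (x \<oplus>\<^bsub>A\<^esub> y) = T x \<oplus>\<^bsub>B\<^esub> T y"
    "\<And>x r. x \<in> carrier A \<Longrightarrow> r \<in> carrier R \<Longrightarrow> T (rsmult A x r) = rsmult B (T x) r"
  using assms unfolding rhom_def by blast+

lemma rhom_comp: "rhom R A B T \<Longrightarrow> rhom R B C U \<Longrightarrow> rhom R A C (\<lambda>x. U (T x))"
  unfolding rhom_def Pi_def by auto

lemma rhom_sum: assumes B: "rmod R B" and T: "rhom R A B T" and U: "rhom R A B U"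
  shows "rhom R A B (\<lambda>x. T x \<oplus>\<^bsub>B\<^esub> U x)"
proof -
  interpret Bg: abelian_group B using rmod_ab[OF B] .
  show ?thesis unfolding rhom_def
  proof (intro conjI ballI)
    show "(\<lambda>x. T x \<oplus>\<^bsub>B\<^esub> U x) \<in> carrier A \<rightarrow> carrier B" using rhomD(1)[OF T] rhomD(1)[OF U] by blast
    fix x y assume x: "x \<in> carrier A" and y: "y \<in> carrier A"
    show "T (x \<oplus>\<^bsub>A\<^esub> y) \<oplus>\<^bsub>B\<^esub> U (x \<oplus>\<^bsub>A\<^esub> y) = (T x \<oplus>\<^bsub>B\<^esub> U x) \<oplus>\<^bsub>B\<^esub> (T y \<oplus>\<^bsub>B\<^esub> U y)"
      using rhomD(1,2)[OF T] rhomD(1,2)[OF U] x y by (simp add: Bg.a_ac)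
  next
    fix x r assume x: "x \<in> carrier A" and r: "r \<in> carrier R"
    show "T (rsmult A x r) \<oplus>\<^bsub>B\<^esub> U (rsmult A x r) = rsmult B (T x \<oplus>\<^bsub>B\<^esub> U x) r"
      using rhomD(1,3)[OF T] rhomD(1,3)[OF U] x r rmod_sm_add[OF B] by simp
  qed
qed

lemma submod_preimage:
  assumes A: "rmod R A" and B: "rmod R B" and T: "rhom R A B T" and V: "submod R B V"
  shows "submod R A {x \<in> carrier A. T x \<in> V}"
proof -
  interpret Ag: abelian_group A using rmod_ab[OF A] .
  interpret Bg: abelian_group B using rmod_ab[OF B] .
  have z: "T \<zero>\<^bsub>A\<^esub> = \<zero>\<^bsub>B\<^esub>" by (rule rhom_zero[OF Ag.abelian_group_axioms Bg.abelian_group_axioms T])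
  have ng: "T (\<ominus>\<^bsub>A\<^esub> x) = \<ominus>\<^bsub>B\<^esub> T x" if "x \<in> carrier A" for x
    by (rule rhom_neg[OF Ag.abelian_group_axioms Bg.abelian_group_axioms T that])
  show ?thesis unfolding submod_def
    using submodD[OF V] z ng rhomD[OF T] rmod_sm_closed[OF A] by auto
qed

lemma submod_Int: "submod R A U \<Longrightarrow> submod R A V \<Longrightarrow> submod R A (U \<inter> V)"
  unfolding submod_def by auto

lemma submod_image:
  assumes A: "rmod R A" and B: "rmod R B" and T: "rhom R A B T" and U: "submod R A U"
  shows "submod R B (T ` U)"
proof -
  interpret Ag: abelian_group A using rmod_ab[OF A] .
  interpret Bg: abelian_group B using rmod_ab[OF B] .
  have z: "T \<zero>\<^bsub>A\<^esub> = \<zero>\<^bsub>B\<^esub>" by (rule rhom_zero[OF Ag.abelian_group_axioms Bg.abelian_group_axioms T])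
  have ng: "T (\<ominus>\<^bsub>A\<^esub> x) = \<ominus>\<^bsub>B\<^esub> T x" if "x \<in> carrier A" for x
    by (rule rhom_neg[OF Ag.abelian_group_axioms Bg.abelian_group_axioms T that])
  have Uc: "x \<in> U \<Longrightarrow> x \<in> carrier A" for x using submodD(1)[OF U] by blast
  show ?thesis unfolding submod_def
  proof (intro conjI ballI)
    show "T ` U \<subseteq> carrier B" using Uc rhomD(1)[OF T] by blast
    show "\<zero>\<^bsub>B\<^esub> \<in> T ` U" using z submodD(2)[OF U] by force
    fix x y assume "x \<in> T ` U" "y \<in> T ` U"
    then obtain a b where "a \<in> U" "b \<in> U" "x = T a" "y = T b" by blast
    then show "x \<oplus>\<^bsub>B\<^esub> y \<in> T ` U" using rhomD(2)[OF T] Uc submodD(3)[OF U]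
      by (metis image_eqI)
  next
    fix x assume "x \<in> T ` U"
    then obtain a where "a \<in> U" "x = T a" by blast
    then show "\<ominus>\<^bsub>B\<^esub> x \<in> T ` U" using ng Uc submodD(4)[OF U] by (metis image_eqI)
  next
    fix x r assume "x \<in> T ` U" "r \<in> carrier R"
    then obtain a where "a \<in> U" "x = T a" by blast
    then show "rsmult B x r \<in> T ` U" using rhomD(3)[OF T] Uc submodD(5)[OF U] \<open>r \<in> carrier R\<close>
      by (metis image_eqI)
  qed
qed

lemma submod_zero: assumes B: "rmod R B" shows "submod R B {\<zero>\<^bsub>B\<^esub>}"
proof -
  interpret Bg: abelian_group B using rmod_ab[OF B] .
  have "\<ominus>\<^bsub>B\<^esub> \<zero>\<^bsub>B\<^esub> = \<zero>\<^bsub>B\<^esub>" by (rule Bg.minus_equality) simp_all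
  then show ?thesis unfolding submod_def using rmod_sm_zero[OF B] by auto
qed

lemma submod_carrier: assumes B: "rmod R B" shows "submod R B (carrier B)"
proof -
  interpret Bg: abelian_group B using rmod_ab[OF B] .
  show ?thesis unfolding submod_def using rmod_sm_closed[OF B] by auto
qed


lemma dir2:
  fixes R :: "'a ring" and M :: "('a, 'b) rmodule"
  assumes M: "rmod R M" and H: "add_fg_D2 R M TYPE(nat \<Rightarrow> 'b)"
  shows "fin_sigma_rickart R M"
  unfolding fin_sigma_rickart_def rickart_def
proof (intro allI impI)
  fix n and \<phi> assume n: "0 < n" and \<phi>: "rhom R (dpow M n) (dpow M n) \<phi>"
  interpret Mg: abelian_group M using rmod_ab[OF M] .
  note Mab = Mg.abelian_group_axioms
  have D: "rmod R (dpow M (n+n))" and Dn: "rmod R (dpow M n)" using rmod_dpow[OF M] by blast+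
  interpret Dg: abelian_group "dpow M (n+n)" using rmod_ab[OF D] .
  interpret Dng: abelian_group "dpow M n" using rmod_ab[OF Dn] .
  have DZ: "\<zero>\<^bsub>dpow M (n+n)\<^esub> = (\<lambda>i. \<zero>\<^bsub>M\<^esub>)" and DnZ: "\<zero>\<^bsub>dpow M n\<^esub> = (\<lambda>i. \<zero>\<^bsub>M\<^esub>)"
    by (simp_all add: dpow_zero)
  have addeq: "add (dpow M n) = add (dpow M (n+n))" by (rule dpow_add_eq)
  have lo: "rhom R (dpow M (n+n)) (dpow M n) (trunc M n)"
    unfolding rhom_def by (intro conjI ballI Pi_I) (simp_all add: lo_carrier[OF Mab] trunc_add[OF Mab] trunc_sm[OF M])
  have hi: "rhom R (dpow M (n+n)) (dpow M n) (hi M n)"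
    unfolding rhom_def by (intro conjI ballI Pi_I) (simp_all add: hi_carrier[OF Mab] hi_add[OF Mab] hi_sm[OF M])
  have up: "rhom R (dpow M n) (dpow M (n+n)) (up M n)"
    unfolding rhom_def by (intro conjI ballI Pi_I) (simp_all add: up_carrier[OF Mab] up_add[OF Mab] up_sm[OF M])
  have incl: "rhom R (dpow M n) (dpow M (n+n)) (\<lambda>x. x)"
    unfolding rhom_def by (intro conjI ballI Pi_I) (simp_all add: small_carrier[OF Mab] dpow_add dpow_sm)
  have \<phi>in: "\<phi> x \<in> carrier (dpow M n)" if "x \<in> carrier (dpow M n)" for x using rhomD(1)[OF \<phi> that] .
  have \<phi>0: "\<phi> (\<lambda>i. \<zero>\<^bsub>M\<^esub>) = (\<lambda>i. \<zero>\<^bsub>M\<^esub>)"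
    using rhom_zero[OF Dng.abelian_group_axioms Dng.abelian_group_axioms \<phi>] DnZ by simp
  have Zc: "(\<lambda>i. \<zero>\<^bsub>M\<^esub>) \<in> carrier (dpow M n)" using Dng.zero_closed DnZ by simp
  define Im where "Im = \<phi> ` carrier (dpow M n)"
  have Im: "submod R (dpow M n) Im" unfolding Im_def by (rule submod_image[OF Dn Dn \<phi> submod_carrier[OF Dn]])
  have ZIm: "(\<lambda>i. \<zero>\<^bsub>M\<^esub>) \<in> Im" unfolding Im_def using \<phi>0 Zc by force
  define S where "S = {f \<in> carrier (dpow M (n+n)). hi M n f \<in> Im}"
  have S: "submod R (dpow M (n+n)) S" unfolding S_def by (rule submod_preimage[OF D Dn hi Im])
  have Sc: "S \<subseteq> carrier (dpow M (n+n))" unfolding S_def by blast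
  define Y where "Y = S \<inter> {f \<in> carrier (dpow M (n+n)). \<phi> (trunc M n f) \<in> {\<zero>\<^bsub>dpow M n\<^esub>}}"
  have Y: "submod R (dpow M (n+n)) Y" unfolding Y_def
    by (rule submod_Int[OF S submod_preimage[OF D Dn rhom_comp[OF lo \<phi>] submod_zero[OF Dn]]])
  have YS: "Y \<subseteq> S" unfolding Y_def by blast
  define K where "K = S \<inter> {f \<in> carrier (dpow M (n+n)). trunc M n f \<in> {\<zero>\<^bsub>dpow M n\<^esub>}}"
  have K: "submod R (dpow M (n+n)) K" unfolding K_def
    by (rule submod_Int[OF S submod_preimage[OF D Dn lo submod_zero[OF Dn]]])
  have KS: "K \<subseteq> S" unfolding K_def by blast
  define L0 where "L0 = {f \<in> carrier (dpow M (n+n)). hi M n f \<in> {\<zero>\<^bsub>dpow M n\<^esub>}}"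
  have L0: "submod R (dpow M (n+n)) L0" unfolding L0_def
    by (rule submod_preimage[OF D Dn hi submod_zero[OF Dn]])
  have L0S: "L0 \<subseteq> S" unfolding L0_def S_def using ZIm DnZ by auto
  define \<gamma> where "\<gamma> f = trunc M n f \<oplus>\<^bsub>dpow M (n+n)\<^esub> up M n (\<phi> (hi M n f))" for f
  have \<gamma>hom: "rhom R (dpow M (n+n)) (dpow M (n+n)) \<gamma>"
    unfolding \<gamma>_def using rhom_sum[OF D rhom_comp[OF lo incl] rhom_comp[OF rhom_comp[OF hi \<phi>] up]] by simp
  have \<gamma>S: "\<gamma> f \<in> S" if f: "f \<in> carrier (dpow M (n+n))" for f
  proof -
    have c: "\<gamma> f \<in> carrier (dpow M (n+n))" using rhomD(1)[OF \<gamma>hom f] .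
    have "hi M n (\<gamma> f) = hi M n (trunc M n f) \<oplus>\<^bsub>dpow M n\<^esub> hi M n (up M n (\<phi> (hi M n f)))"
      unfolding \<gamma>_def by (rule hi_add[OF Mab])
    also have "\<dots> = \<phi> (hi M n f)"
      using hi_small[OF Mab lo_carrier[OF Mab f]] hi_up[OF Mab \<phi>in[OF hi_carrier[OF Mab f]]]
        \<phi>in[OF hi_carrier[OF Mab f]] DnZ[symmetric] by simp
    finally show ?thesis unfolding S_def Im_def using c hi_carrier[OF Mab f] by blast
  qed
  have \<gamma>onto: "\<gamma> ` carrier (dpow M (n+n)) = S"
  proof
    show "\<gamma> ` carrier (dpow M (n+n)) \<subseteq> S" using \<gamma>S by blast
    show "S \<subseteq> \<gamma> ` carrier (dpow M (n+n))"
    proof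
      fix f assume fS: "f \<in> S"
      then have f: "f \<in> carrier (dpow M (n+n))" and "hi M n f \<in> Im" unfolding S_def by auto
      then obtain x where x: "x \<in> carrier (dpow M n)" "hi M n f = \<phi> x" unfolding Im_def by blast
      define f' where "f' = trunc M n f \<oplus>\<^bsub>dpow M (n+n)\<^esub> up M n x"
      have lof: "trunc M n f \<in> carrier (dpow M n)" using lo_carrier[OF Mab f] .
      have f'c: "f' \<in> carrier (dpow M (n+n))" unfolding f'_def
        using small_carrier[OF Mab lof] up_carrier[OF Mab x(1)] by simp
      have lo': "trunc M n f' = trunc M n f"
      proof -
        have "trunc M n f' = trunc M n (trunc M n f) \<oplus>\<^bsub>dpow M n\<^esub> trunc M n (up M n x)"
          unfolding f'_def by (rule trunc_add[OF Mab])
        then show ?thesis using trunc_id[OF lof] lo_up[OF Mab] DnZ[symmetric] lof by simp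
      qed
      have hi': "hi M n f' = x"
      proof -
        have "hi M n f' = hi M n (trunc M n f) \<oplus>\<^bsub>dpow M n\<^esub> hi M n (up M n x)"
          unfolding f'_def by (rule hi_add[OF Mab])
        then show ?thesis using hi_small[OF Mab lof] hi_up[OF Mab x(1)] DnZ[symmetric] x(1) by simp
      qed
      have "\<gamma> f' = f" unfolding \<gamma>_def lo' hi' x(2)[symmetric] using decomp[OF Mab f] by simp
      then show "f \<in> \<gamma> ` carrier (dpow M (n+n))" using f'c by blast
    qed
  qed
  have fg: "fin_Mgen R M ((dpow M (n+n))\<lparr>carrier := S\<rparr>)"
    unfolding fin_Mgen_def
  proof (intro exI conjI)
    show "0 < n + n" using n by simp
    show "rhom R (dpow M (n+n)) ((dpow M (n+n))\<lparr>carrier := S\<rparr>) \<gamma>"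
      using rhom_restr[OF Sc] \<gamma>hom \<gamma>S by blast
    show "\<gamma> ` carrier (dpow M (n+n)) = carrier ((dpow M (n+n))\<lparr>carrier := S\<rparr>)" using \<gamma>onto by simp
  qed
  have inadd: "in_add R M (dpow M (n+n))"
    unfolding in_add_def
  proof (intro exI conjI)
    show "0 < n + n" using n by simp
    show "direct_summand R (dpow M (n+n)) (carrier (dpow M (n+n)))"
      unfolding direct_summand_def
    proof (intro conjI exI)
      show "submod R (dpow M (n+n)) (carrier (dpow M (n+n)))" by (rule submod_carrier[OF D])
      show "submod R (dpow M (n+n)) {\<zero>\<^bsub>dpow M (n+n)\<^esub>}" by (rule submod_zero[OF D])
      show "carrier (dpow M (n+n)) \<inter> {\<zero>\<^bsub>dpow M (n+n)\<^esub>} = {\<zero>\<^bsub>dpow M (n+n)\<^esub>}" by simp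
      show "{k \<oplus>\<^bsub>dpow M (n+n)\<^esub> l | k l. k \<in> carrier (dpow M (n+n)) \<and> l \<in> {\<zero>\<^bsub>dpow M (n+n)\<^esub>}} = carrier (dpow M (n+n))"
        by force
    qed
    show "riso R (dpow M (n+n)) ((dpow M (n+n))\<lparr>carrier := carrier (dpow M (n+n))\<rparr>)"
      unfolding riso_def
    proof (intro exI conjI)
      show "rhom R (dpow M (n+n)) ((dpow M (n+n))\<lparr>carrier := carrier (dpow M (n+n))\<rparr>) (\<lambda>x. x)"
        unfolding rhom_def by simp
      show "bij_betw (\<lambda>x. x) (carrier (dpow M (n+n))) (carrier ((dpow M (n+n))\<lparr>carrier := carrier (dpow M (n+n))\<rparr>))"
        by (simp add: bij_betw_def)
    qed
  qed
  have D2: "D2 R ((dpow M (n+n))\<lparr>carrier := S\<rparr>)"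
    using H D inadd S fg unfolding add_fg_D2_def by blast
  have lo_zero: "trunc M n (\<lambda>i. \<zero>\<^bsub>M\<^esub>) = (\<lambda>i. \<zero>\<^bsub>M\<^esub>)" using trunc_id[OF Zc] .
  have YN: "submod R ((dpow M (n+n))\<lparr>carrier := S\<rparr>) Y"
    using submod_sub[OF Dg.abelian_group_axioms S] Y YS by blast
  have KN: "direct_summand R ((dpow M (n+n))\<lparr>carrier := S\<rparr>) K"
    unfolding direct_summand_def
  proof (intro conjI exI)
    show "submod R ((dpow M (n+n))\<lparr>carrier := S\<rparr>) K" using submod_sub[OF Dg.abelian_group_axioms S] K KS by blast
    show "submod R ((dpow M (n+n))\<lparr>carrier := S\<rparr>) L0" using submod_sub[OF Dg.abelian_group_axioms S] L0 L0S by blast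
    show "K \<inter> L0 = {\<zero>\<^bsub>(dpow M (n+n))\<lparr>carrier := S\<rparr>\<^esub>}"
    proof
      show "{\<zero>\<^bsub>(dpow M (n+n))\<lparr>carrier := S\<rparr>\<^esub>} \<subseteq> K \<inter> L0" using submodD(2)[OF K] submodD(2)[OF L0] by simp
      show "K \<inter> L0 \<subseteq> {\<zero>\<^bsub>(dpow M (n+n))\<lparr>carrier := S\<rparr>\<^esub>}"
      proof
        fix f assume "f \<in> K \<inter> L0"
        then have f: "f \<in> carrier (dpow M (n+n))" "trunc M n f = (\<lambda>i. \<zero>\<^bsub>M\<^esub>)" "hi M n f = (\<lambda>i. \<zero>\<^bsub>M\<^esub>)"
          unfolding K_def L0_def using DnZ by auto
        have "f = (\<lambda>i. \<zero>\<^bsub>M\<^esub>) \<oplus>\<^bsub>dpow M (n+n)\<^esub> up M n (\<lambda>i. \<zero>\<^bsub>M\<^esub>)" using decomp[OF Mab f(1)] f(2,3) by simp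
        also have "\<dots> = (\<lambda>i. \<zero>\<^bsub>M\<^esub>)" using up_zero[OF Mab] DZ Dg.l_zero Dg.zero_closed by metis
        finally show "f \<in> {\<zero>\<^bsub>(dpow M (n+n))\<lparr>carrier := S\<rparr>\<^esub>}" using DZ by simp
      qed
    qed
    show "{k \<oplus>\<^bsub>(dpow M (n+n))\<lparr>carrier := S\<rparr>\<^esub> l | k l. k \<in> K \<and> l \<in> L0} = carrier ((dpow M (n+n))\<lparr>carrier := S\<rparr>)"
    proof
      show "{k \<oplus>\<^bsub>(dpow M (n+n))\<lparr>carrier := S\<rparr>\<^esub> l | k l. k \<in> K \<and> l \<in> L0} \<subseteq> carrier ((dpow M (n+n))\<lparr>carrier := S\<rparr>)"
        using submodD(3)[OF S] KS L0S by auto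
      show "carrier ((dpow M (n+n))\<lparr>carrier := S\<rparr>) \<subseteq> {k \<oplus>\<^bsub>(dpow M (n+n))\<lparr>carrier := S\<rparr>\<^esub> l | k l. k \<in> K \<and> l \<in> L0}"
      proof
        fix f assume "f \<in> carrier ((dpow M (n+n))\<lparr>carrier := S\<rparr>)"
        then have fS: "f \<in> S" by simp
        then have f: "f \<in> carrier (dpow M (n+n))" and hf: "hi M n f \<in> Im" unfolding S_def by auto
        have hic: "hi M n f \<in> carrier (dpow M n)" using hi_carrier[OF Mab f] .
        have loc: "trunc M n f \<in> carrier (dpow M n)" using lo_carrier[OF Mab f] .
        have uc: "up M n (hi M n f) \<in> carrier (dpow M (n+n))" using up_carrier[OF Mab hic] .
        have lc: "trunc M n f \<in> carrier (dpow M (n+n))" using small_carrier[OF Mab loc] .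
        have "f = up M n (hi M n f) \<oplus>\<^bsub>dpow M (n+n)\<^esub> trunc M n f"
          using decomp[OF Mab f] Dg.a_comm[OF uc lc] by simp
        moreover have "up M n (hi M n f) \<in> K"
          unfolding K_def S_def using uc hi_up[OF Mab hic] hf lo_up[OF Mab] DnZ by simp
        moreover have "trunc M n f \<in> L0"
          unfolding L0_def using lc hi_small[OF Mab loc] DnZ by simp
        ultimately show "f \<in> {k \<oplus>\<^bsub>(dpow M (n+n))\<lparr>carrier := S\<rparr>\<^esub> l | k l. k \<in> K \<and> l \<in> L0}" by force
      qed
    qed
  qed
  interpret q: qsetup2 R "dpow M (n+n)" Y S by unfold_locales (fact D Y S YS)+
  define h where "h f = up M n (\<phi> (trunc M n f))" for f
  have hhom: "rhom R (dpow M (n+n)) (dpow M (n+n)) h"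
    unfolding h_def using rhom_comp[OF rhom_comp[OF lo \<phi>] up] by simp
  have hK: "h f \<in> K" if fS: "f \<in> S" for f
  proof -
    have f: "f \<in> carrier (dpow M (n+n))" using fS Sc by blast
    have pc: "\<phi> (trunc M n f) \<in> carrier (dpow M n)" using \<phi>in[OF lo_carrier[OF Mab f]] .
    have "h f \<in> carrier (dpow M (n+n))" using rhomD(1)[OF hhom f] .
    moreover have "hi M n (h f) \<in> Im" unfolding h_def hi_up[OF Mab pc] Im_def using lo_carrier[OF Mab f] by blast
    moreover have "trunc M n (h f) = \<zero>\<^bsub>dpow M n\<^esub>" unfolding h_def lo_up[OF Mab] DnZ ..
    ultimately show ?thesis unfolding K_def S_def by blast
  qed
  have hS: "h ` S = K"
  proof
    show "h ` S \<subseteq> K" using hK by blast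
    show "K \<subseteq> h ` S"
    proof
      fix f assume fK: "f \<in> K"
      then have f: "f \<in> carrier (dpow M (n+n))" and hf: "hi M n f \<in> Im" and lf: "trunc M n f = (\<lambda>i. \<zero>\<^bsub>M\<^esub>)"
        unfolding K_def S_def using DnZ by auto
      obtain x where x: "x \<in> carrier (dpow M n)" "hi M n f = \<phi> x" using hf unfolding Im_def by blast
      have xS: "x \<in> S" unfolding S_def using small_carrier[OF Mab x(1)] hi_small[OF Mab x(1)] ZIm by simp
      have uc: "up M n (hi M n f) \<in> carrier (dpow M (n+n))" using up_carrier[OF Mab hi_carrier[OF Mab f]] .
      have "h x = up M n (hi M n f)" unfolding h_def trunc_id[OF x(1)] x(2) ..
      also have "\<dots> = f" using decomp[OF Mab f] lf DZ Dg.l_zero[OF uc] by simp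
      finally show "f \<in> h ` S" using xS by blast
    qed
  qed
  have hker: "h f = \<zero>\<^bsub>dpow M (n+n)\<^esub> \<longleftrightarrow> f \<in> Y" if fS: "f \<in> S" for f
  proof -
    have f: "f \<in> carrier (dpow M (n+n))" using fS Sc by blast
    have pc: "\<phi> (trunc M n f) \<in> carrier (dpow M n)" using \<phi>in[OF lo_carrier[OF Mab f]] .
    have "h f = \<zero>\<^bsub>dpow M (n+n)\<^esub> \<longleftrightarrow> \<phi> (trunc M n f) = (\<lambda>i. \<zero>\<^bsub>M\<^esub>)"
      unfolding h_def DZ using up_inj0[OF Mab pc] up_zero[OF Mab] by metis
    then show ?thesis unfolding Y_def using fS f DnZ by auto
  qed
  have iso: "riso R (quot ((dpow M (n+n))\<lparr>carrier := S\<rparr>) Y) ((dpow M (n+n))\<lparr>carrier := S\<rparr>\<lparr>carrier := K\<rparr>)"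
  proof (rule q.first_iso[OF KS hK hS])
    show "h (x \<oplus>\<^bsub>dpow M (n+n)\<^esub> z) = h x \<oplus>\<^bsub>dpow M (n+n)\<^esub> h z" if "x \<in> S" "z \<in> S" for x z
      using rhomD(2)[OF hhom] that Sc by blast
    show "h (rsmult (dpow M (n+n)) x r) = rsmult (dpow M (n+n)) (h x) r" if "x \<in> S" "r \<in> carrier R" for x r
      using rhomD(3)[OF hhom] that Sc by blast
  qed (simp_all add: hker)
  have dsY: "direct_summand R ((dpow M (n+n))\<lparr>carrier := S\<rparr>) Y"
    using D2 YN KN iso unfolding D2_def by blast
  then obtain L where LN: "submod R ((dpow M (n+n))\<lparr>carrier := S\<rparr>) L"
    and YL: "Y \<inter> L = {\<zero>\<^bsub>(dpow M (n+n))\<lparr>carrier := S\<rparr>\<^esub>}"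
    and YL2: "{k \<oplus>\<^bsub>(dpow M (n+n))\<lparr>carrier := S\<rparr>\<^esub> l | k l. k \<in> Y \<and> l \<in> L} = carrier ((dpow M (n+n))\<lparr>carrier := S\<rparr>)"
    unfolding direct_summand_def by blast
  have L: "submod R (dpow M (n+n)) L" and LS: "L \<subseteq> S" using LN submod_sub[OF Dg.abelian_group_axioms S] by blast+
  have YL': "Y \<inter> L = {(\<lambda>i. \<zero>\<^bsub>M\<^esub>)}" using YL DZ by simp
  have YL2': "{k \<oplus>\<^bsub>dpow M (n+n)\<^esub> l | k l. k \<in> Y \<and> l \<in> L} = S" using YL2 by simp
  define L' where "L' = trunc M n ` L"
  have L': "submod R (dpow M n) L'" unfolding L'_def by (rule submod_image[OF D Dn lo L])
  have rk: "rker (dpow M n) (dpow M n) \<phi> = {x \<in> carrier (dpow M n). \<phi> x \<in> {\<zero>\<^bsub>dpow M n\<^esub>}}"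
    unfolding rker_def by simp
  have rksub: "submod R (dpow M n) (rker (dpow M n) (dpow M n) \<phi>)"
    unfolding rk by (rule submod_preimage[OF Dn Dn \<phi> submod_zero[OF Dn]])
  show "direct_summand R (dpow M n) (rker (dpow M n) (dpow M n) \<phi>)"
    unfolding direct_summand_def
  proof (intro conjI exI)
    show "submod R (dpow M n) (rker (dpow M n) (dpow M n) \<phi>)" by (rule rksub)
    show "submod R (dpow M n) L'" by (rule L')
    show "rker (dpow M n) (dpow M n) \<phi> \<inter> L' = {\<zero>\<^bsub>dpow M n\<^esub>}"
    proof
      show "{\<zero>\<^bsub>dpow M n\<^esub>} \<subseteq> rker (dpow M n) (dpow M n) \<phi> \<inter> L'"
        using submodD(2)[OF rksub] submodD(2)[OF L'] by simp
      show "rker (dpow M n) (dpow M n) \<phi> \<inter> L' \<subseteq> {\<zero>\<^bsub>dpow M n\<^esub>}"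
      proof
        fix x assume x: "x \<in> rker (dpow M n) (dpow M n) \<phi> \<inter> L'"
        then obtain l where l: "l \<in> L" "x = trunc M n l" unfolding L'_def by blast
        have lS: "l \<in> S" using l(1) LS by blast
        have "\<phi> (trunc M n l) = \<zero>\<^bsub>dpow M n\<^esub>" using x l(2) unfolding rker_def by blast
        then have "l \<in> Y" unfolding Y_def using lS Sc by blast
        then have "l = (\<lambda>i. \<zero>\<^bsub>M\<^esub>)" using YL' l(1) by blast
        then show "x \<in> {\<zero>\<^bsub>dpow M n\<^esub>}" using l(2) lo_zero DnZ by simp
      qed
    qed
    show "{k \<oplus>\<^bsub>dpow M n\<^esub> l | k l. k \<in> rker (dpow M n) (dpow M n) \<phi> \<and> l \<in> L'} = carrier (dpow M n)"
    proof
      show "{k \<oplus>\<^bsub>dpow M n\<^esub> l | k l. k \<in> rker (dpow M n) (dpow M n) \<phi> \<and> l \<in> L'} \<subseteq> carrier (dpow M n)"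
        using submodD(1)[OF rksub] submodD(1)[OF L'] by auto
      show "carrier (dpow M n) \<subseteq> {k \<oplus>\<^bsub>dpow M n\<^esub> l | k l. k \<in> rker (dpow M n) (dpow M n) \<phi> \<and> l \<in> L'}"
      proof
        fix x assume x: "x \<in> carrier (dpow M n)"
        have xS: "x \<in> S" unfolding S_def using small_carrier[OF Mab x] hi_small[OF Mab x] ZIm by simp
        then obtain y l where yl: "y \<in> Y" "l \<in> L" "x = y \<oplus>\<^bsub>dpow M (n+n)\<^esub> l" using YL2' by blast
        have yc: "y \<in> carrier (dpow M (n+n))" using yl(1) YS Sc by blast
        have "x = trunc M n x" using trunc_id[OF x] by simp
        also have "\<dots> = trunc M n y \<oplus>\<^bsub>dpow M n\<^esub> trunc M n l" unfolding yl(3) by (rule trunc_add[OF Mab])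
        finally have xe: "x = trunc M n y \<oplus>\<^bsub>dpow M n\<^esub> trunc M n l" .
        have "trunc M n y \<in> rker (dpow M n) (dpow M n) \<phi>"
          unfolding rker_def using yl(1) lo_carrier[OF Mab yc] unfolding Y_def by blast
        moreover have "trunc M n l \<in> L'" unfolding L'_def using yl(2) by blast
        ultimately show "x \<in> {k \<oplus>\<^bsub>dpow M n\<^esub> l | k l. k \<in> rker (dpow M n) (dpow M n) \<phi> \<and> l \<in> L'}"
          using xe by blast
      qed
    qed
  qed
qed


theorem mainTheorem4:
  fixes R :: "'a ring" and M :: "('a, 'b) rmodule"
  assumes "rmod R M"
  shows "(fin_sigma_rickart R M \<longrightarrow> add_fg_D2 R M TYPE('c)) \<and>
         (add_fg_D2 R M TYPE(nat \<Rightarrow> 'b) \<longrightarrow> fin_sigma_rickart R M)"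
  using dir1[OF assms] dir2[OF assms] by blast

end
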